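(* Let ${\cal G}$ be a locally finite graph and let $\phi:(0,\infty)\to(0,\infty)$ be non-decreasing. Suppose that for every admissible $\Omega\subseteq{\cal G}$, $${\cal A}(\partial\Omega)\ge\frac{{\cal V}(\Omega)}{\phi({\cal V}(\Omega))}.$$ Let $F(x)=\int_x^\infty\frac{(\phi(4/u))^2}{u}\,du$ and $C=\frac{1}{32\rho_{\sup}}$. Then for every vertex $x$ and $t>0$, $$K(x,x,t)\le F^{-1}(Ct).$$
   Context: A graph ${\cal G}$: undirected graph $(V,E)$ (multiple edges, self-loops allowed), edge lengths $\ell_e>0$, boundary vertices $\partial{\cal G}$, interior vertices $\mathring V$, vertex measure ${\cal V}$ (${\cal V}(v)>0$), edge measure ${\cal E}$ (zero on vertices, $a_e>0$ times Lebesgue on the interior of edge $e$); identified with its geometric realization; locally finite (each vertex on finitely many edges). $\rho_{\sup}=\sup_v{\cal V}(v)^{-1}\sum_{e\ni v}{\cal E}(e)/2$. For open $\Omega$ with finite topological boundary, ${\cal A}(\partial\Omega)=\sum_{x\in\partial\Omega\setminus V}a_{e(x)}+\sum_{v\in\partial\Omega\cap V}\sum_{e:\,v\in\overline{\Omega\cap e^\circ}}a_e$ ($e(x)$ the edge containing $x$, $e^\circ$ the open interior of $e$); $\Omega$ is admissible if open, with finite boundary, disjoint from $\partial{\cal G}$; ${\cal V}(\Omega)$ is its ${\cal V}$-measure. The Laplacian on edgewise linear functions is $(\Delta f)(v)={\cal V}(v)^{-1}\sum_{e\sim\{u,v\}}a_e(f(v)-f(u))/\ell_e$. For finite $A\subseteq\mathring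 V$, $K_A(x,y,t)=\sum_ie^{-t\lambda_i}\phi_i(x)\phi_i(y)$ with $\{\phi_i\}$ an orthonormal (for $\int fg\,d{\cal V}$) eigenbasis, $\Delta_A\phi_i=\lambda_i\phi_i$, of $\Delta_A$ (= $\Delta$ at vertices of $A$, $0$ elsewhere) on edgewise linear functions vanishing off $A$. The minimal non-negative heat kernel is $K(x,y,t)=\lim_iK_{A_i}(x,y,t)$ for any increasing sequence of finite sets $A_i\subseteq\mathring V$ with union $\mathring V$ (the limit exists and is independent of the sequence). *)

theory Defs
  imports "HOL-Analysis.Analysis"
begin

text \<open>A (metric) graph. Vertex set = UNIV :: 'v set, edge set = UNIV :: 'e set.
  Each edge has two (ordered, for bookkeeping) endpoints; a self-loop has equal endpoints;
  multiple edges are allowed.\<close>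
record ('v, 'e) mgraph =
  ends  :: "'e \<Rightarrow> 'v \<times> 'v"   \<comment> \<open>endpoints; edge e is parametrised by s in (0, len e), s near 0 = fst endpoint\<close>
  len   :: "'e \<Rightarrow> real"
  cond  :: "'e \<Rightarrow> real"         \<comment> \<open>a_e, density of the edge measure\<close>
  vmeas :: "'v \<Rightarrow> real"
  bdry  :: "'v set"

definition incident :: "('v,'e) mgraph \<Rightarrow> 'v \<Rightarrow> 'e set" where
  "incident G v = {e. fst (ends G e) = v \<or> snd (ends G e) = v}"

definition other_end :: "('v,'e) mgraph \<Rightarrow> 'e \<Rightarrow> 'v \<Rightarrow> 'v" where
  "other_end G e v = (if fst (ends G e) = v then snd (ends G e) else fst (ends G e))"

definition wf_graph :: "('v,'e) mgraph \<Rightarrow> bool" where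
  "wf_graph G \<longleftrightarrow> (\<forall>e. len G e > 0) \<and> (\<forall>e. cond G e > 0) \<and> (\<forall>v. vmeas G v > 0)"

definition locally_finite :: "('v,'e) mgraph \<Rightarrow> bool" where
  "locally_finite G \<longleftrightarrow> (\<forall>v. finite (incident G v))"

text \<open>Points of the geometric realisation: vertices, and interior points of edges.\<close>
datatype ('v, 'e) gpoint = Vx 'v | Ept 'e real

definition points :: "('v,'e) mgraph \<Rightarrow> ('v,'e) gpoint set" where
  "points G = range Vx \<union> {Ept e s | e s. 0 < s \<and> s < len G e}"

definition near_end :: "('v,'e) mgraph \<Rightarrow> 'e \<Rightarrow> 'v \<Rightarrow> real \<Rightarrow> real \<Rightarrow> bool" where
  "near_end G e v eps s \<longleftrightarrow> 0 < s \<and> s < len G e \<and>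
     ((fst (ends G e) = v \<and> s < eps) \<or> (snd (ends G e) = v \<and> len G e - s < eps))"

fun nbhd :: "('v,'e) mgraph \<Rightarrow> ('v,'e) gpoint \<Rightarrow> real \<Rightarrow> ('v,'e) gpoint set" where
  "nbhd G (Vx v) eps = insert (Vx v) {Ept e s | e s. near_end G e v eps s}"
| "nbhd G (Ept e s) eps = {Ept e r | r. 0 < r \<and> r < len G e \<and> \<bar>r - s\<bar> < eps}"

definition gopen :: "('v,'e) mgraph \<Rightarrow> ('v,'e) gpoint set \<Rightarrow> bool" where
  "gopen G \<Omega> \<longleftrightarrow> \<Omega> \<subseteq> points G \<and> (\<forall>p\<in>\<Omega>. \<exists>eps>0. nbhd G p eps \<subseteq> \<Omega>)"

definition gboundary :: "('v,'e) mgraph \<Rightarrow> ('v,'e) gpoint set \<Rightarrow> ('v,'e) gpoint set" where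
  "gboundary G \<Omega> = {p \<in> points G. p \<notin> \<Omega> \<and> (\<forall>eps>0. nbhd G p eps \<inter> \<Omega> \<noteq> {})}"

definition in_closure_edge :: "('v,'e) mgraph \<Rightarrow> ('v,'e) gpoint set \<Rightarrow> 'e \<Rightarrow> 'v \<Rightarrow> bool" where
  "in_closure_edge G \<Omega> e v \<longleftrightarrow> (\<forall>eps>0. \<exists>s. near_end G e v eps s \<and> Ept e s \<in> \<Omega>)"

definition boundary_area :: "('v,'e) mgraph \<Rightarrow> ('v,'e) gpoint set \<Rightarrow> real" where
  "boundary_area G \<Omega> =
     (\<Sum>p\<in>{p \<in> gboundary G \<Omega>. p \<notin> range Vx}. (case p of Ept e s \<Rightarrow> cond G e | Vx v \<Rightarrow> 0))
   + (\<Sum>v\<in>{v. Vx v \<in> gboundary G \<Omega>}. \<Sum>e\<in>{e. in_closure_edge G \<Omega> e v}. cond G e)"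

definition admissible :: "('v,'e) mgraph \<Rightarrow> ('v,'e) gpoint set \<Rightarrow> bool" where
  "admissible G \<Omega> \<longleftrightarrow> gopen G \<Omega> \<and> finite (gboundary G \<Omega>) \<and> \<Omega> \<inter> Vx ` bdry G = {}"

definition vol :: "('v,'e) mgraph \<Rightarrow> ('v,'e) gpoint set \<Rightarrow> real" where
  "vol G \<Omega> = infsum (vmeas G) {v. Vx v \<in> \<Omega>}"

definition rho_sup :: "('v,'e) mgraph \<Rightarrow> ennreal" where
  "rho_sup G = (SUP v. ennreal ((\<Sum>e\<in>incident G v. cond G e * len G e / 2) / vmeas G v))"

text \<open>Graph Laplacian at a vertex on (edgewise linear) functions given by vertex values.\<close>
definition glap :: "('v,'e) mgraph \<Rightarrow> ('v \<Rightarrow> real) \<Rightarrow> 'v \<Rightarrow> real" where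
  "glap G f v = (\<Sum>e\<in>incident G v. cond G e * (f v - f (other_end G e v)) / len G e) / vmeas G v"

definition is_eigenbasis :: "('v,'e) mgraph \<Rightarrow> 'v set \<Rightarrow> (nat \<Rightarrow> real) \<Rightarrow> (nat \<Rightarrow> 'v \<Rightarrow> real) \<Rightarrow> bool" where
  "is_eigenbasis G A lam ph \<longleftrightarrow>
     (\<forall>i<card A. \<forall>u. u \<notin> A \<longrightarrow> ph i u = 0) \<and>
     (\<forall>i<card A. \<forall>j<card A. (\<Sum>u\<in>A. vmeas G u * ph i u * ph j u) = (if i = j then 1 else 0)) \<and>
     (\<forall>i<card A. \<forall>v\<in>A. glap G (ph i) v = lam i * ph i v)"

definition heatK_fin :: "('v,'e) mgraph \<Rightarrow> 'v set \<Rightarrow> 'v \<Rightarrow> 'v \<Rightarrow> real \<Rightarrow> real" where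
  "heatK_fin G A x y t =
     (let B = (SOME B. is_eigenbasis G A (fst B) (snd B))
      in \<Sum>i<card A. exp (- t * fst B i) * snd B i x * snd B i y)"

text \<open>Minimal heat kernel (at vertices): limit over finite subsets of the interior vertices.\<close>
definition heatK :: "('v,'e) mgraph \<Rightarrow> 'v \<Rightarrow> 'v \<Rightarrow> real \<Rightarrow> real" where
  "heatK G x y t = Lim (finite_subsets_at_top (- bdry G)) (\<lambda>A. heatK_fin G A x y t)"

text \<open>Generalised inverse of a (decreasing) function F : (0,\<infinity>) \<rightarrow> [0,\<infinity>]; inf of empty set is \<infinity>.\<close>
definition gen_inv :: "(real \<Rightarrow> ennreal) \<Rightarrow> ennreal \<Rightarrow> ereal" where
  "gen_inv F s = Inf {ereal y | y. 0 < y \<and> F y \<le> s}"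

end

theory Submission
  imports Defs
begin

definition ww :: "('v,'e) mgraph \<Rightarrow> 'e \<Rightarrow> real" where
  "ww G e = cond G e / len G e"

definition EA :: "('v,'e) mgraph \<Rightarrow> 'v set \<Rightarrow> 'e set" where
  "EA G A = (\<Union>v\<in>A. incident G v)"

definition ip :: "('v,'e) mgraph \<Rightarrow> 'v set \<Rightarrow> ('v \<Rightarrow> real) \<Rightarrow> ('v \<Rightarrow> real) \<Rightarrow> real" where
  "ip G A f g = (\<Sum>u\<in>A. vmeas G u * f u * g u)"

definition p1 :: "('v,'e) mgraph \<Rightarrow> 'e \<Rightarrow> 'v" where "p1 G e = fst (ends G e)"
definition p2 :: "('v,'e) mgraph \<Rightarrow> 'e \<Rightarrow> 'v" where "p2 G e = snd (ends G e)"

definition Dform :: "('v,'e) mgraph \<Rightarrow> 'v set \<Rightarrow> ('v \<Rightarrow> real) \<Rightarrow> ('v \<Rightarrow> real) \<Rightarrow> real" where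
  "Dform G A f g = (\<Sum>e\<in>EA G A. ww G e * (f (p1 G e) - f (p2 G e)) * (g (p1 G e) - g (p2 G e)))"

definition sA :: "'v set \<Rightarrow> ('v \<Rightarrow> real) \<Rightarrow> bool" where
  "sA A f \<longleftrightarrow> (\<forall>u. u \<notin> A \<longrightarrow> f u = 0)"

locale lfg =
  fixes G :: "('v,'e) mgraph"
  assumes wf: "wf_graph G" and lf: "locally_finite G"
begin

lemma len_pos: "len G e > 0" using wf by (auto simp: wf_graph_def)
lemma cond_pos: "cond G e > 0" using wf by (auto simp: wf_graph_def)
lemma vm_pos: "vmeas G v > 0" using wf by (auto simp: wf_graph_def)
lemma ww_pos: "ww G e > 0" using len_pos cond_pos by (simp add: ww_def)
lemma fin_inc: "finite (incident G v)" using lf by (simp add: locally_finite_def)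
lemma fin_EA: "finite A \<Longrightarrow> finite (EA G A)" by (simp add: EA_def fin_inc)

lemma inc_iff: "e \<in> incident G v \<longleftrightarrow> p1 G e = v \<or> p2 G e = v"
  by (simp add: incident_def p1_def p2_def)

lemma green:
  assumes A: "finite A" and f: "sA A f" and g: "sA A g"
  shows "(\<Sum>v\<in>A. vmeas G v * g v * glap G f v) = Dform G A f g"
proof -
  define X where "X v e = g v * (ww G e * (f v - f (other_end G e v)))" for v e
  have "(\<Sum>v\<in>A. vmeas G v * g v * glap G f v) = (\<Sum>v\<in>A. \<Sum>e\<in>incident G v. X v e)"
    by (rule sum.cong) (auto simp: glap_def X_def ww_def sum_distrib_left vm_pos[THEN less_imp_neq, symmetric] field_simps)
  also have "\<dots> = (\<Sum>v\<in>A. \<Sum>e\<in>EA G A. (if e \<in> incident G v then X v e else 0))"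
    by (rule sum.cong[OF refl], subst sum.If_cases) (auto simp: fin_EA A EA_def fin_inc intro!: sum.cong)
  also have "\<dots> = (\<Sum>e\<in>EA G A. \<Sum>v\<in>A. (if e \<in> incident G v then X v e else 0))"
    by (rule sum.swap)
  also have "\<dots> = Dform G A f g" unfolding Dform_def
  proof (rule sum.cong[OF refl])
    fix e assume e: "e \<in> EA G A"
    let ?p = "p1 G e" and ?q = "p2 G e"
    have "(\<Sum>v\<in>A. (if e \<in> incident G v then X v e else 0)) = (\<Sum>v\<in>{?p,?q}. X v e)"
    proof -
      have "(\<Sum>v\<in>A. (if e \<in> incident G v then X v e else 0)) = (\<Sum>v\<in>A \<inter> {?p,?q}. X v e)"
        using A by (subst sum.inter_restrict) (auto simp: inc_iff intro!: sum.cong)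
      also have "\<dots> = (\<Sum>v\<in>{?p,?q}. X v e)"
        using g by (intro sum.mono_neutral_left) (auto simp: X_def sA_def)
      finally show ?thesis .
    qed
    also have "\<dots> = ww G e * (f ?p - f ?q) * (g ?p - g ?q)"
      by (cases "?p = ?q") (auto simp: X_def other_end_def p1_def p2_def algebra_simps)
    finally show "(\<Sum>v\<in>A. (if e \<in> incident G v then X v e else 0)) = ww G e * (f ?p - f ?q) * (g ?p - g ?q)" .
  qed
  finally show ?thesis .
qed

end

lemma linsys:
  fixes m :: "'i \<Rightarrow> 'j \<Rightarrow> real"
  assumes "finite I" "finite J" "card I < card J"
  shows "\<exists>c. (\<exists>j\<in>J. c j \<noteq> 0) \<and> (\<forall>i\<in>I. (\<Sum>j\<in>J. m i j * c j) = 0)"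
  using assms
proof (induction I arbitrary: J m rule: finite_induct)
  case empty
  then have "J \<noteq> {}" by auto
  then show ?case by (rule_tac x="\<lambda>_. 1" in exI) auto
next
  case (insert i0 I)
  show ?case
  proof (cases "\<forall>j\<in>J. m i0 j = 0")
    case True
    from insert have "card I < card J" by simp
    from insert.IH[OF insert(4) this, of m] obtain c where
      c: "(\<exists>j\<in>J. c j \<noteq> 0)" "(\<forall>i\<in>I. (\<Sum>j\<in>J. m i j * c j) = 0)" by blast
    show ?thesis using c True by (rule_tac x=c in exI) auto
  next
    case False
    then obtain j0 where j0: "j0 \<in> J" "m i0 j0 \<noteq> 0" by blast
    define J' where "J' = J - {j0}"
    define m' where "m' i j = m i j - m i j0 * m i0 j / m i0 j0" for i j
    have fJ': "finite J'" using insert by (simp add: J'_def)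
    have cJ': "card I < card J'" using insert j0 by (simp add: J'_def card_Diff_singleton)
    from insert.IH[OF fJ' cJ', of m'] obtain c' where
      c': "(\<exists>j\<in>J'. c' j \<noteq> 0)" "(\<forall>i\<in>I. (\<Sum>j\<in>J'. m' i j * c' j) = 0)" by blast
    define c where "c j = (if j = j0 then - (\<Sum>j\<in>J'. m i0 j * c' j) / m i0 j0 else c' j)" for j
    have split: "(\<Sum>j\<in>J. h j) = h j0 + (\<Sum>j\<in>J'. h j)" for h :: "'j \<Rightarrow> real"
      using j0 insert by (simp add: J'_def sum.remove)
    have cJ'eq: "(\<Sum>j\<in>J'. h j * c j) = (\<Sum>j\<in>J'. h j * c' j)" for h
      by (rule sum.cong) (auto simp: c_def J'_def)
    have "(\<Sum>j\<in>J. m i0 j * c j) = 0"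
      using j0 by (simp add: split cJ'eq) (simp add: c_def)
    moreover have "(\<Sum>j\<in>J. m i j * c j) = 0" if i: "i \<in> I" for i
    proof -
      have "(\<Sum>j\<in>J. m i j * c j) = m i j0 * c j0 + (\<Sum>j\<in>J'. m i j * c' j)"
        by (simp add: split cJ'eq)
      also have "\<dots> = (\<Sum>j\<in>J'. m' i j * c' j)"
        using j0 by (simp add: c_def m'_def sum_subtractf sum_distrib_left sum_divide_distrib
              algebra_simps)
      also have "\<dots> = 0" using c' i by blast
      finally show ?thesis .
    qed
    moreover have "\<exists>j\<in>J. c j \<noteq> 0" using c' by (auto simp: c_def J'_def)
    ultimately show ?thesis by (rule_tac x=c in exI) auto
  qed
qed

context lfg
begin

lemma ip_sym: "ip G A f g = ip G A g f" by (simp add: ip_def mult_ac)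

lemma ip_sum_right: "finite K \<Longrightarrow> ip G A f (\<lambda>u. \<Sum>k\<in>K. a k * h k u) = (\<Sum>k\<in>K. a k * ip G A f (h k))"
  by (simp add: ip_def sum_distrib_left sum_distrib_right mult_ac sum.swap[of _ A])

lemma ip_pos: "finite A \<Longrightarrow> u \<in> A \<Longrightarrow> f u \<noteq> 0 \<Longrightarrow> ip G A f f > 0"
  unfolding ip_def
proof (rule sum_pos2[of _ u])
  fix i show "0 \<le> vmeas G i * f i * f i" using vm_pos[of i] by (simp add: mult.assoc)
next
  assume "f u \<noteq> 0" then show "0 < vmeas G u * f u * f u" using vm_pos[of u]
  proof -
    have "f u * f u > 0" using \<open>f u \<noteq> 0\<close> not_real_square_gt_zero[of "f u"] by blast
    then show ?thesis using vm_pos[of u] by (simp add: mult.assoc)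
  qed
qed

definition orthn :: "'v set \<Rightarrow> nat \<Rightarrow> (nat \<Rightarrow> 'v \<Rightarrow> real) \<Rightarrow> bool" where
  "orthn A k ph \<longleftrightarrow> (\<forall>i<k. sA A (ph i)) \<and> (\<forall>i<k. \<forall>j<k. ip G A (ph i) (ph j) = (if i = j then 1 else 0))"

lemma complete:
  assumes A: "finite A" and o: "orthn A (card A) ph" and u: "u \<in> A"
  shows "f u = (\<Sum>i<card A. ip G A (ph i) f * ph i u)"
proof (rule ccontr)
  let ?n = "card A"
  define g where "g v = f v - (\<Sum>i<?n. ip G A (ph i) f * ph i v)" for v
  assume "f u \<noteq> (\<Sum>i<card A. ip G A (ph i) f * ph i u)"
  then have gu: "g u \<noteq> 0" by (simp add: g_def)
  have gorth: "ip G A (ph k) g = 0" if k: "k < ?n" for k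
  proof -
    have "ip G A (ph k) g = ip G A (ph k) f - ip G A (ph k) (\<lambda>v. \<Sum>i<?n. ip G A (ph i) f * ph i v)"
      by (simp add: g_def ip_def sum_subtractf right_diff_distrib)
    also have "ip G A (ph k) (\<lambda>v. \<Sum>i<?n. ip G A (ph i) f * ph i v) = (\<Sum>i<?n. ip G A (ph i) f * ip G A (ph k) (ph i))"
      by (rule ip_sum_right) simp
    also have "\<dots> = (\<Sum>i<?n. (if i = k then ip G A (ph i) f else 0))"
    proof (rule sum.cong[OF refl])
      fix x assume "x \<in> {..<?n}"
      then have "ip G A (ph k) (ph x) = (if k = x then 1 else 0)" using o k unfolding orthn_def by auto
      then show "ip G A (ph x) f * ip G A (ph k) (ph x) = (if x = k then ip G A (ph x) f else 0)" by auto
    qed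
    also have "\<dots> = ip G A (ph k) f" using k by simp
    finally show ?thesis by simp
  qed
  define psi where "psi j = (if j < ?n then ph j else g)" for j
  have "card A < card {..?n}" by simp
  from linsys[OF A _ this, of "\<lambda>v j. psi j v"] obtain c where
    c: "\<exists>j\<in>{..?n}. c j \<noteq> 0" "\<forall>v\<in>A. (\<Sum>j\<in>{..?n}. psi j v * c j) = 0" by auto
  have "c k = 0" if k: "k \<le> ?n" for k
  proof -
    have oo: "\<forall>i<?n. \<forall>j<?n. ip G A (ph i) (ph j) = (if i = j then 1 else 0)"
      using o unfolding orthn_def by blast
    have ipkk: "ip G A (psi k) (psi j) = 0" if j: "j \<le> ?n" and False: "j \<noteq> k" for j
    proof -
      show ?thesis
      proof (cases "j < ?n")
        case jn: True
        show ?thesis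
        proof (cases "k < ?n")
          case True then show ?thesis using oo jn False by (simp add: psi_def)
        next
          case kn: False
          then show ?thesis using gorth[OF jn] ip_sym[of A g] jn by (simp add: psi_def)
        qed
      next
        case jn: False
        then have "k < ?n" using False j k by simp
        then show ?thesis using gorth jn False by (simp add: psi_def)
      qed
    qed
    have "0 = ip G A (psi k) (\<lambda>v. \<Sum>j\<in>{..?n}. c j * psi j v)"
      using c(2) by (simp add: ip_def mult_ac)
    also have "\<dots> = (\<Sum>j\<in>{..?n}. c j * ip G A (psi k) (psi j))"
      by (rule ip_sum_right) simp
    also have "\<dots> = (\<Sum>j\<in>{..?n}. (if j = k then c k * ip G A (psi k) (psi k) else 0))"
      by (rule sum.cong[OF refl]) (auto dest: ipkk)
    also have "\<dots> = c k * ip G A (psi k) (psi k)"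
      using k by simp
    finally have "c k * ip G A (psi k) (psi k) = 0" by simp
    moreover have "ip G A (psi k) (psi k) > 0"
    proof (cases "k < ?n")
      case True then show ?thesis using o by (simp add: psi_def orthn_def)
    next
      case False then show ?thesis using ip_pos[of A u g, OF A u gu] by (simp add: psi_def)
    qed
    ultimately show ?thesis by simp
  qed
  with c(1) show False by auto
qed

end

context lfg
begin

lemma Dform_sym: "Dform G A f g = Dform G A g f"
  by (simp add: Dform_def mult_ac)

lemma Dform_lin: "Dform G A (\<lambda>v. a * f v + b * g v) k = a * Dform G A f k + b * Dform G A g k"
  unfolding Dform_def sum_distrib_left sum.distrib[symmetric] by (rule sum.cong[OF refl]) (simp add: algebra_simps)

lemma Dform_nonneg: "Dform G A f f \<ge> 0"
  unfolding Dform_def by (intro sum_nonneg) (simp add: mult.assoc ww_pos less_imp_le)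

lemma Dform_expand: assumes "finite A"
  shows "Dform G A (\<lambda>v. f v + e * h v) (\<lambda>v. f v + e * h v) = Dform G A f f + 2 * e * Dform G A f h + e^2 * Dform G A h h"
  unfolding Dform_def sum_distrib_left sum.distrib[symmetric] by (rule sum.cong[OF refl]) (simp add: algebra_simps power2_eq_square)

lemma Dform_zero: "Dform G A (\<lambda>_. 0) g = 0" by (simp add: Dform_def)

lemma ip_scale: "ip G A (\<lambda>v. a * f v) g = a * ip G A f g"
  by (simp add: ip_def sum_distrib_left mult_ac)

lemma ip_scale2: "ip G A (\<lambda>v. a * f v) (\<lambda>v. a * f v) = a^2 * ip G A f f"
  by (simp add: ip_def sum_distrib_left power2_eq_square mult_ac)

lemma ip_add_left: "ip G A (\<lambda>v. f v + e * h v) g = ip G A f g + e * ip G A h g"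
  unfolding ip_def sum_distrib_left sum.distrib[symmetric] by (rule sum.cong[OF refl]) (simp add: algebra_simps)

lemma ip_expand: "ip G A (\<lambda>v. f v + e * h v) (\<lambda>v. f v + e * h v) = ip G A f f + 2 * e * ip G A f h + e^2 * ip G A h h"
  unfolding ip_def sum_distrib_left sum.distrib[symmetric] by (rule sum.cong[OF refl]) (simp add: algebra_simps power2_eq_square)

lemma ip_zero_imp: "finite A \<Longrightarrow> ip G A f f = 0 \<Longrightarrow> u \<in> A \<Longrightarrow> f u = 0"
  using ip_pos by fastforce

lemma ip_nonneg: "ip G A f f \<ge> 0"
  unfolding ip_def by (intro sum_nonneg) (simp add: mult.assoc vm_pos less_imp_le)

lemma green_ip: "finite A \<Longrightarrow> sA A f \<Longrightarrow> sA A g \<Longrightarrow> ip G A g (glap G f) = Dform G A f g"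
  using green by (simp add: ip_def)

definition eig :: "'v set \<Rightarrow> nat \<Rightarrow> (nat \<Rightarrow> real) \<Rightarrow> (nat \<Rightarrow> 'v \<Rightarrow> real) \<Rightarrow> bool" where
  "eig A k lam ph \<longleftrightarrow> orthn A k ph \<and> (\<forall>i<k. \<forall>v\<in>A. glap G (ph i) v = lam i * ph i v)"

lemma cont_coord: "continuous_on S (\<lambda>f::'v\<Rightarrow>real. f u)"
  by (rule continuous_on_subset[OF continuous_on_product_coordinates]) simp


lemma abs_le_sq: "\<bar>x::real\<bar> \<le> 1 + x^2"
proof -
  have "0 \<le> (\<bar>x\<bar> - 1)^2" by simp
  then have "0 \<le> \<bar>x\<bar>*\<bar>x\<bar> - 2*\<bar>x\<bar> + 1" by (simp add: power2_eq_square algebra_simps)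
  moreover have "\<bar>x\<bar>*\<bar>x\<bar> = x^2" by (simp add: power2_eq_square abs_mult_self_eq)
  moreover have "\<bar>x\<bar> \<ge> 0" by simp
  ultimately show ?thesis by linarith
qed

lemma step_exists:
  assumes A: "finite A" and e: "eig A k lam ph" and k: "k < card A"
  shows "\<exists>f M. sA A f \<and> ip G A f f = 1 \<and> (\<forall>j<k. ip G A f (ph j) = 0) \<and> (\<forall>v\<in>A. glap G f v = M * f v)"
proof -
  have oo: "\<forall>i<k. \<forall>j<k. ip G A (ph i) (ph j) = (if i = j then 1 else 0)" and sp: "\<forall>i<k. sA A (ph i)"
    and ev: "\<forall>i<k. \<forall>v\<in>A. glap G (ph i) v = lam i * ph i v"
    using e unfolding eig_def orthn_def by blast+
  define S where "S = {f. sA A f \<and> ip G A f f = 1 \<and> (\<forall>j<k. ip G A f (ph j) = 0)}"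
  define B where "B u = (if u \<in> A then {-(1 + 1 / vmeas G u)..1 + 1 / vmeas G u} else {0::real})" for u
  have SB: "S \<subseteq> PiE UNIV B"
  proof
    fix f assume f: "f \<in> S"
    have "f u \<in> B u" for u
    proof (cases "u \<in> A")
      case True
      have "vmeas G u * f u * f u \<le> ip G A f f"
        unfolding ip_def using A True
        by (intro member_le_sum) (auto simp: mult.assoc vm_pos less_imp_le)
      then have "vmeas G u * (f u)^2 \<le> 1" using f by (simp add: S_def power2_eq_square mult.assoc)
      then have "(f u)^2 \<le> 1 / vmeas G u" using vm_pos[of u] by (simp add: field_simps)
      then have "\<bar>f u\<bar> \<le> 1 + 1 / vmeas G u" using abs_le_sq[of "f u"] by linarith
      then show ?thesis using True by (simp add: B_def abs_le_iff)
    next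
      case False then show ?thesis using f by (simp add: S_def sA_def B_def)
    qed
    then show "f \<in> PiE UNIV B" by auto
  qed
  have cB: "compact (PiE UNIV B)"
  proof -
    have "compactin (product_topology (\<lambda>i. euclidean) UNIV) (PiE UNIV B)"
      by (subst compactin_PiE) (auto simp: B_def)
    then show ?thesis by (simp add: euclidean_product_topology)
  qed
  have contip: "continuous_on UNIV (\<lambda>f::'v\<Rightarrow>real. ip G A f (g f))" if "continuous_on UNIV g" for g
    unfolding ip_def
    by (intro continuous_intros cont_coord continuous_on_product_then_coordinatewise[OF that])
  have cS: "closed S"
  proof -
    have "S = (\<Inter>u\<in>-A. {f. f u = 0}) \<inter> {f. ip G A f f = 1} \<inter> (\<Inter>j\<in>{..<k}. {f. ip G A f (ph j) = 0})"
      by (auto simp: S_def sA_def)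
    moreover have "closed (\<Inter>u\<in>-A. {f::'v\<Rightarrow>real. f u = 0})"
      by (intro closed_INT ballI closed_Collect_eq cont_coord continuous_on_const)
    moreover have "closed {f. ip G A f f = 1}"
      by (intro closed_Collect_eq contip continuous_on_id continuous_on_const)
    moreover have "closed (\<Inter>j\<in>{..<k}. {f. ip G A f (ph j) = 0})"
      by (intro closed_INT ballI closed_Collect_eq contip continuous_on_const)
    ultimately show ?thesis by auto
  qed
  have cpS: "compact S" using compact_Int_closed[OF cB cS] SB by (simp add: Int_absorb1)
  have nS: "S \<noteq> {}"
  proof -
    have "card {..<k} < card A" using k by simp
    from linsys[OF _ A this, of "\<lambda>j u. vmeas G u * ph j u"] obtain c where
      c: "\<exists>u\<in>A. c u \<noteq> 0" "\<forall>j\<in>{..<k}. (\<Sum>u\<in>A. vmeas G u * ph j u * c u) = 0" by auto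
    define f0 where "f0 u = (if u \<in> A then c u else 0)" for u
    obtain u0 where u0: "u0 \<in> A" "c u0 \<noteq> 0" using c by auto
    have pos: "ip G A f0 f0 > 0" using ip_pos[of A u0 f0] u0 A by (simp add: f0_def)
    define f where "f u = (1 / sqrt (ip G A f0 f0)) * f0 u" for u
    have "ip G A f f = 1"
      unfolding f_def using pos ip_scale2[of A "1 / sqrt (ip G A f0 f0)" f0] by (simp add: power_divide)
    moreover have "sA A f" by (simp add: sA_def f_def f0_def)
    moreover have "ip G A f (ph j) = 0" if "j < k" for j
    proof -
      have "ip G A f0 (ph j) = 0"
        using c(2) that unfolding ip_def f0_def by (auto simp: mult_ac intro: trans[OF sum.cong[OF refl]])
      then show ?thesis unfolding f_def ip_scale by simp
    qed
    ultimately have "f \<in> S" by (simp add: S_def)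
    then show ?thesis by auto
  qed
  have contQ: "continuous_on S (\<lambda>f. Dform G A f f)"
    unfolding Dform_def by (intro continuous_intros cont_coord)
  from continuous_attains_sup[OF cpS nS contQ] obtain fs where fs: "fs \<in> S" and
    mx: "\<And>f. f \<in> S \<Longrightarrow> Dform G A f f \<le> Dform G A fs fs" by blast
  define M where "M = Dform G A fs fs"
  have fsA: "sA A fs" and fs1: "ip G A fs fs = 1" and fso: "\<And>j. j < k \<Longrightarrow> ip G A fs (ph j) = 0"
    using fs by (auto simp: S_def)
  have hom: "Dform G A f f \<le> M * ip G A f f" if f: "sA A f" "\<And>j. j < k \<Longrightarrow> ip G A f (ph j) = 0" for f
  proof (cases "ip G A f f = 0")
    case True
    then have "f = (\<lambda>_. 0)" using ip_zero_imp[OF A True] f(1) by (auto simp: sA_def)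
    then show ?thesis by (simp add: Dform_zero ip_def)
  next
    case False
    then have pos: "ip G A f f > 0" using ip_nonneg[of A f] by simp
    define a where "a = 1 / sqrt (ip G A f f)"
    define g where "g u = a * f u" for u
    have a2: "a^2 * ip G A f f = 1" using pos by (simp add: a_def power_divide)
    have "g \<in> S" unfolding g_def S_def using f a2 ip_scale2[of A a f]
      by (auto simp: sA_def ip_scale)
    then have "Dform G A g g \<le> M" using mx by (simp add: M_def)
    moreover have "Dform G A g g = a^2 * Dform G A f f"
      unfolding g_def Dform_def sum_distrib_left by (rule sum.cong[OF refl]) (simp add: algebra_simps power2_eq_square)
    ultimately have "a^2 * Dform G A f f \<le> a^2 * (M * ip G A f f)" using a2 by (simp add: algebra_simps)
    moreover have "a^2 > 0" using pos by (simp add: a_def)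
    ultimately show ?thesis by simp
  qed
  define h where "h v = (if v \<in> A then glap G fs v - M * fs v else 0)" for v
  have hA: "sA A h" by (simp add: sA_def h_def)
  have iph: "ip G A g h = ip G A g (glap G fs) - M * ip G A g fs" for g
    by (simp add: ip_def h_def sum_subtractf sum_distrib_left algebra_simps cong: sum.cong)
  have ho: "ip G A h (ph j) = 0" if j: "j < k" for j
  proof -
    have "ip G A (ph j) (glap G fs) = Dform G A fs (ph j)" using green_ip[OF A fsA] sp j by simp
    also have "\<dots> = Dform G A (ph j) fs" by (rule Dform_sym)
    also have "\<dots> = ip G A fs (glap G (ph j))" using green_ip[OF A _ fsA] sp j by simp
    also have "\<dots> = ip G A fs (\<lambda>v. lam j * ph j v)" using ev j by (simp add: ip_def)
    also have "\<dots> = 0" using fso[OF j] ip_sym[of A fs "\<lambda>v. lam j * ph j v"] ip_scale[of A "lam j" "ph j" fs] ip_sym[of A "ph j" fs] by simp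
    finally show ?thesis using iph[of "ph j"] fso[OF j] ip_sym[of A h "ph j"] ip_sym[of A "ph j" fs] by simp
  qed
  have fsh: "ip G A fs h = 0"
    using iph[of fs] green_ip[OF A fsA fsA] fs1 by (simp add: M_def)
  define H where "H = ip G A h h"
  have Hdef: "H = Dform G A fs h"
    using iph[of h] green_ip[OF A fsA hA] fsh by (simp add: H_def ip_sym[of A h fs])
  have H0: "H = 0"
  proof (rule ccontr)
    assume "H \<noteq> 0"
    then have Hp: "H > 0" using ip_nonneg[of A h] by (simp add: H_def)
    define X where "X = M * H - Dform G A h h"
    define e where "e = H / (1 + \<bar>X\<bar>)"
    have ep: "e > 0" using Hp by (simp add: e_def)
    define f where "f v = fs v + e * h v" for v
    have fA: "sA A f" using fsA hA by (simp add: sA_def f_def)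
    have fo: "ip G A f (ph j) = 0" if "j < k" for j
      unfolding f_def ip_add_left using fso[OF that] ho[OF that] by simp
    have ipf: "ip G A f f = 1 + e^2 * H"
      unfolding f_def ip_expand using fs1 fsh by (simp add: H_def)
    have Df: "Dform G A f f = M + 2 * e * H + e^2 * Dform G A h h"
      unfolding f_def using Dform_expand[OF A, of fs e h] by (simp add: M_def Hdef)
    from hom[OF fA fo] have "M + 2 * e * H + e^2 * Dform G A h h \<le> M * (1 + e^2 * H)"
      by (simp add: Df ipf)
    then have "2 * e * H \<le> e * (e * X)" by (simp add: X_def algebra_simps power2_eq_square)
    then have "2 * H \<le> e * X" using ep by simp
    also have "e * X \<le> e * \<bar>X\<bar>" using ep by (simp add: mult_left_mono)
    also have "e * \<bar>X\<bar> < H" using Hp by (simp add: e_def field_simps)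
    finally show False using Hp by simp
  qed
  have "\<forall>v\<in>A. glap G fs v = M * fs v"
  proof
    fix v assume v: "v \<in> A"
    have "h v = 0" using ip_zero_imp[OF A _ v, of h] H0 by (simp add: H_def)
    then show "glap G fs v = M * fs v" using v by (simp add: h_def)
  qed
  then show ?thesis using fsA fs1 fso by blast
qed

lemma eig_exists: assumes A: "finite A" and k: "k \<le> card A" shows "\<exists>lam ph. eig A k lam ph"
  using k
proof (induction k)
  case 0 then show ?case by (simp add: eig_def orthn_def)
next
  case (Suc k)
  then obtain lam ph where e: "eig A k lam ph" by auto
  from step_exists[OF A e] Suc obtain f M where
    f: "sA A f" "ip G A f f = 1" "\<forall>j<k. ip G A f (ph j) = 0" "\<forall>v\<in>A. glap G f v = M * f v" by auto
  have oo: "\<forall>i<k. \<forall>j<k. ip G A (ph i) (ph j) = (if i = j then 1 else 0)" and sp: "\<forall>i<k. sA A (ph i)"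
    and ev: "\<forall>i<k. \<forall>v\<in>A. glap G (ph i) v = lam i * ph i v"
    using e unfolding eig_def orthn_def by blast+
  have s1: "\<forall>i<Suc k. sA A ((ph(k := f)) i)" using sp f(1) by (auto simp: less_Suc_eq)
  have s2: "ip G A ((ph(k := f)) i) ((ph(k := f)) j) = (if i = j then 1 else 0)" if "i < Suc k" "j < Suc k" for i j
  proof (cases "i = k")
    case True
    show ?thesis
    proof (cases "j = k")
      case False then have "j < k" using that by simp
      then show ?thesis using True False f(3) by simp
    qed (use True f(2) in simp)
  next
    case False
    then have i: "i < k" using that by simp
    show ?thesis
    proof (cases "j = k")
      case True then show ?thesis using i f(3) ip_sym[of A "ph i" f] by simp
    next
      case False then have "j < k" using that by simp
      then show ?thesis using i oo by simp
    qed
  qed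
  have s3: "\<forall>i<Suc k. \<forall>v\<in>A. glap G ((ph(k := f)) i) v = (lam(k := M)) i * (ph(k := f)) i v"
    using ev f(4) by (auto simp: less_Suc_eq)
  have "eig A (Suc k) (lam(k := M)) (ph(k := f))"
    unfolding eig_def orthn_def using s1 s2 s3 by blast
  then show ?case by blast
qed

lemma eig_is_eigenbasis: "eig A (card A) lam ph \<Longrightarrow> is_eigenbasis G A lam ph"
  unfolding eig_def orthn_def is_eigenbasis_def sA_def ip_def by blast

lemma eigenbasis_is_eig: "is_eigenbasis G A lam ph \<Longrightarrow> eig A (card A) lam ph"
  unfolding eig_def orthn_def is_eigenbasis_def sA_def ip_def by blast

lemma eigenbasis_exists: "finite A \<Longrightarrow> \<exists>lam ph. is_eigenbasis G A lam ph"
  using eig_exists[of A "card A"] eig_is_eigenbasis by blast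

end

context lfg
begin

definition dg :: "'v \<Rightarrow> real" where
  "dg v = (\<Sum>e\<in>incident G v. ww G e) / vmeas G v"

definition PA :: "'v set \<Rightarrow> real \<Rightarrow> ('v \<Rightarrow> real) \<Rightarrow> 'v \<Rightarrow> real" where
  "PA A c f = (\<lambda>v. if v \<in> A then c * f v - glap G f v else 0)"

definition Hs :: "'v set \<Rightarrow> (nat \<Rightarrow> real) \<Rightarrow> (nat \<Rightarrow> 'v \<Rightarrow> real) \<Rightarrow> real \<Rightarrow> ('v \<Rightarrow> real) \<Rightarrow> 'v \<Rightarrow> real" where
  "Hs A lam ph t f x = (\<Sum>i<card A. exp (- t * lam i) * ip G A (ph i) f * ph i x)"

lemma dg_nonneg: "dg v \<ge> 0"
  unfolding dg_def using vm_pos[of v] ww_pos by (intro divide_nonneg_pos sum_nonneg) (auto intro: less_imp_le)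

lemma glap_alt: "glap G f v = dg v * f v - (\<Sum>e\<in>incident G v. ww G e * f (other_end G e v)) / vmeas G v"
proof -
  have h: "(\<Sum>e\<in>incident G v. cond G e * (f v - f (other_end G e v)) / len G e) =
     (\<Sum>e\<in>incident G v. ww G e) * f v - (\<Sum>e\<in>incident G v. ww G e * f (other_end G e v))"
    unfolding sum_distrib_right sum_subtractf[symmetric] by (rule sum.cong[OF refl]) (simp add: ww_def add_divide_distrib[symmetric] algebra_simps)
  show ?thesis unfolding glap_def dg_def h by (simp add: diff_divide_distrib)
qed

lemma glap_sum: "finite I \<Longrightarrow> glap G (\<lambda>u. \<Sum>i\<in>I. a i * h i u) v = (\<Sum>i\<in>I. a i * glap G (h i) v)"
proof -
  assume I: "finite I"
  have "glap G (\<lambda>u. \<Sum>i\<in>I. a i * h i u) v =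
     (\<Sum>e\<in>incident G v. \<Sum>i\<in>I. a i * (cond G e * (h i v - h i (other_end G e v)) / len G e)) / vmeas G v"
    unfolding glap_def
    by (rule arg_cong[where f="\<lambda>x. x / _"], rule sum.cong[OF refl])
       (simp add: sum_subtractf[symmetric] sum_distrib_left sum_divide_distrib right_diff_distrib mult_ac)
  also have "\<dots> = (\<Sum>i\<in>I. a i * glap G (h i) v)"
    unfolding glap_def by (simp add: sum.swap[of _ "incident G v"] sum_divide_distrib sum_distrib_left mult_ac)
  finally show ?thesis .
qed

context
  fixes A lam ph
  assumes A: "finite A" and E: "eig A (card A) lam ph"
begin

lemma oo: "i < card A \<Longrightarrow> j < card A \<Longrightarrow> ip G A (ph i) (ph j) = (if i = j then 1 else 0)"
  using E unfolding eig_def orthn_def by blast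

lemma sp: "i < card A \<Longrightarrow> sA A (ph i)"
  using E unfolding eig_def orthn_def by blast

lemma ev: "i < card A \<Longrightarrow> v \<in> A \<Longrightarrow> glap G (ph i) v = lam i * ph i v"
  using E unfolding eig_def by blast

lemma ph_out: "i < card A \<Longrightarrow> v \<notin> A \<Longrightarrow> ph i v = 0"
  using sp unfolding sA_def by blast

lemma expansion:
  assumes f: "sA A f"
  shows "(PA A c ^^ m) f v = (\<Sum>i<card A. (c - lam i)^m * ip G A (ph i) f * ph i v)"
proof (induction m arbitrary: v)
  case 0
  show ?case
  proof (cases "v \<in> A")
    case True
    then show ?thesis using complete[OF A _ True, of ph f] E by (simp add: eig_def)
  next
    case False
    then show ?thesis using f ph_out by (simp add: sA_def)
  qed
next
  case (Suc m)
  have eq: "(PA A c ^^ m) f = (\<lambda>u. \<Sum>i<card A. ((c - lam i)^m * ip G A (ph i) f) * ph i u)"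
    by (rule ext) (simp add: Suc.IH mult.assoc)
  show ?case
  proof (cases "v \<in> A")
    case True
    have "(PA A c ^^ Suc m) f v = c * (\<Sum>i<card A. ((c - lam i)^m * ip G A (ph i) f) * ph i v)
        - (\<Sum>i<card A. ((c - lam i)^m * ip G A (ph i) f) * glap G (ph i) v)"
      using True by (simp add: PA_def eq glap_sum)
    also have "\<dots> = (\<Sum>i<card A. (c - lam i)^Suc m * ip G A (ph i) f * ph i v)"
      using True ev by (simp add: sum_distrib_left sum_subtractf[symmetric] algebra_simps)
    finally show ?thesis .
  next
    case False
    then show ?thesis using ph_out by (simp add: PA_def)
  qed
qed

lemma heat_series:
  assumes f: "sA A f"
  shows "(\<lambda>m. t^m / fact m * (PA A c ^^ m) f x) sums (exp (c * t) * Hs A lam ph t f x)"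
proof -
  have trm: "t^m / fact m * (PA A c ^^ m) f x = (\<Sum>i<card A. (t * (c - lam i))^m / fact m * (ip G A (ph i) f * ph i x))" for m
    by (simp add: expansion[OF f] sum_distrib_left power_mult_distrib mult_ac)
  have S: "(\<lambda>m. (\<Sum>i<card A. (t * (c - lam i))^m / fact m * (ip G A (ph i) f * ph i x))) sums
        (\<Sum>i<card A. exp (t * (c - lam i)) * (ip G A (ph i) f * ph i x))"
  proof (rule sums_sum)
    fix i
    have "(\<lambda>m. (t * (c - lam i))^m /\<^sub>R fact m) sums exp (t * (c - lam i))" by (rule exp_converges)
    then have "(\<lambda>m. (t * (c - lam i))^m / fact m) sums exp (t * (c - lam i))"
      by (simp add: divide_inverse_commute)
    then show "(\<lambda>m. (t * (c - lam i))^m / fact m * (ip G A (ph i) f * ph i x)) sums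
        (exp (t * (c - lam i)) * (ip G A (ph i) f * ph i x))" by (rule sums_mult2)
  qed
  have E2: "(\<Sum>i<card A. exp (t * (c - lam i)) * (ip G A (ph i) f * ph i x)) = exp (c * t) * Hs A lam ph t f x"
    unfolding Hs_def sum_distrib_left
    by (rule sum.cong[OF refl]) (simp add: right_diff_distrib exp_diff exp_minus field_simps mult_exp_exp[symmetric])
  have L: "(\<lambda>m. t^m / fact m * (PA A c ^^ m) f x) = (\<lambda>m. (\<Sum>i<card A. (t * (c - lam i))^m / fact m * (ip G A (ph i) f * ph i x)))"
    using trm by (intro ext)
  show ?thesis unfolding L by (rule S[unfolded E2])
qed

end
end

context lfg
begin

lemma PA_at: "v \<in> A \<Longrightarrow> PA A c f v = (c - dg v) * f v + (\<Sum>e\<in>incident G v. ww G e * f (other_end G e v)) / vmeas G v"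
  by (simp add: PA_def glap_alt algebra_simps)

lemma PA_sA: "sA A (PA A c f)" by (simp add: sA_def PA_def)

lemma sumw_nonneg: "(\<forall>u. f u \<ge> 0) \<Longrightarrow> (\<Sum>e\<in>incident G v. ww G e * f (other_end G e v)) / vmeas G v \<ge> 0"
  using vm_pos[of v] ww_pos by (intro divide_nonneg_pos sum_nonneg) (auto intro: mult_nonneg_nonneg less_imp_le)

lemma PA_nonneg:
  assumes c: "\<forall>v\<in>A. dg v \<le> c" and f: "\<forall>u. f u \<ge> 0"
  shows "PA A c f v \<ge> 0"
proof (cases "v \<in> A")
  case True
  have "(c - dg v) * f v \<ge> 0" using c f True by simp
  then show ?thesis using True sumw_nonneg[OF f, of v] by (simp add: PA_at)
qed (simp add: PA_def)

lemma PA_mono: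
  assumes AB: "A \<subseteq> B" and c: "\<forall>v\<in>B. dg v \<le> c" and fg: "\<forall>u. 0 \<le> f u \<and> f u \<le> g u"
  shows "PA A c f v \<le> PA B c g v"
proof (cases "v \<in> A")
  case True
  then have vB: "v \<in> B" using AB by auto
  have "(c - dg v) * f v \<le> (c - dg v) * g v" using c fg vB by (intro mult_left_mono) auto
  moreover have "(\<Sum>e\<in>incident G v. ww G e * f (other_end G e v)) \<le> (\<Sum>e\<in>incident G v. ww G e * g (other_end G e v))"
    using fg ww_pos by (intro sum_mono mult_left_mono) (auto intro: less_imp_le)
  then have "(\<Sum>e\<in>incident G v. ww G e * f (other_end G e v)) / vmeas G v \<le> (\<Sum>e\<in>incident G v. ww G e * g (other_end G e v)) / vmeas G v"
    using vm_pos[of v] by (simp add: divide_right_mono)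
  ultimately show ?thesis using True vB by (simp add: PA_at)
next
  case False
  have "\<forall>u. g u \<ge> 0" using fg by (meson order_trans)
  then show ?thesis using False PA_nonneg[OF c] by (simp add: PA_def)
qed

lemma PA_bound:
  assumes c: "\<forall>v\<in>A. dg v \<le> c" "c \<ge> 0" and f: "\<forall>u. 0 \<le> f u \<and> f u \<le> M"
  shows "PA A c f v \<le> c * M"
proof (cases "v \<in> A")
  case True
  have "(c - dg v) * f v \<le> (c - dg v) * M" using c f True by (intro mult_left_mono) auto
  moreover have "(\<Sum>e\<in>incident G v. ww G e * f (other_end G e v)) \<le> (\<Sum>e\<in>incident G v. ww G e * M)"
    using f ww_pos by (intro sum_mono mult_left_mono) (auto intro: less_imp_le)
  then have "(\<Sum>e\<in>incident G v. ww G e * f (other_end G e v)) / vmeas G v \<le> dg v * M"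
    using vm_pos[of v] by (simp add: divide_right_mono dg_def sum_distrib_right[symmetric])
  ultimately show ?thesis using True by (simp add: PA_at algebra_simps)
next
  case False
  have "M \<ge> 0" using f by (meson order_trans)
  then show ?thesis using False c by (simp add: PA_def)
qed

lemma PAn_nonneg:
  assumes c: "\<forall>v\<in>A. dg v \<le> c" and f: "\<forall>u. f u \<ge> 0"
  shows "(PA A c ^^ m) f v \<ge> 0"
  using f by (induction m arbitrary: v) (auto intro: PA_nonneg[OF c])

lemma PAn_bound:
  assumes c: "\<forall>v\<in>A. dg v \<le> c" "c \<ge> 0" and f: "\<forall>u. 0 \<le> f u \<and> f u \<le> 1"
  shows "(PA A c ^^ m) f v \<le> c ^ m"
proof (induction m arbitrary: v)
  case 0 then show ?case using f by simp
next
  case (Suc m)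
  have "\<forall>u. 0 \<le> (PA A c ^^ m) f u \<and> (PA A c ^^ m) f u \<le> c^m"
    using Suc PAn_nonneg[OF c(1)] f by auto
  from PA_bound[OF c this] show ?case by simp
qed

lemma PAn_mono:
  assumes AB: "A \<subseteq> B" and c: "\<forall>v\<in>B. dg v \<le> c" and f: "\<forall>u. f u \<ge> 0"
  shows "(PA A c ^^ m) f v \<le> (PA B c ^^ m) f v"
proof (induction m arbitrary: v)
  case 0 then show ?case by simp
next
  case (Suc m)
  have cA: "\<forall>v\<in>A. dg v \<le> c" using c AB by auto
  have "\<forall>u. 0 \<le> (PA A c ^^ m) f u \<and> (PA A c ^^ m) f u \<le> (PA B c ^^ m) f u"
    using Suc PAn_nonneg[OF cA f] by auto
  from PA_mono[OF AB c this] show ?case by simp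
qed

context
  fixes A lam ph
  assumes A: "finite A" and E: "eig A (card A) lam ph"
begin

lemma Hs_nonneg:
  assumes c: "\<forall>v\<in>A. dg v \<le> c" and f: "sA A f" "\<forall>u. f u \<ge> 0" and t: "t \<ge> 0"
  shows "Hs A lam ph t f x \<ge> 0"
proof -
  have "0 \<le> exp (c * t) * Hs A lam ph t f x"
  proof (rule sums_le[OF _ sums_zero heat_series[OF A E f(1), of t c x]])
    fix n show "0 \<le> t^n / fact n * (PA A c ^^ n) f x"
      using PAn_nonneg[OF c f(2)] t by simp
  qed
  then show ?thesis by (simp add: zero_le_mult_iff)
qed

lemma Hs_le1:
  assumes c: "\<forall>v\<in>A. dg v \<le> c" "c \<ge> 0" and f: "sA A f" "\<forall>u. 0 \<le> f u \<and> f u \<le> 1" and t: "t \<ge> 0"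
  shows "Hs A lam ph t f x \<le> 1"
proof -
  have ex: "(\<lambda>m. t^m / fact m * c^m) sums exp (c * t)"
    using exp_converges[of "c * t"] by (simp add: divide_inverse_commute power_mult_distrib mult_ac)
  have "exp (c * t) * Hs A lam ph t f x \<le> exp (c * t)"
  proof (rule sums_le[OF _ heat_series[OF A E f(1), of t c x] ex])
    fix n show "t^n / fact n * (PA A c ^^ n) f x \<le> t^n / fact n * c^n"
      using PAn_bound[OF c f(2)] t by (intro mult_left_mono) auto
  qed
  then show ?thesis by simp
qed

end

lemma Hs_mono:
  assumes A: "finite A" and EA: "eig A (card A) lamA phA" and B: "finite B" and EB: "eig B (card B) lamB phB"
    and AB: "A \<subseteq> B" and f: "sA A f" "\<forall>u. f u \<ge> 0" and t: "t \<ge> 0"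
  shows "Hs A lamA phA t f x \<le> Hs B lamB phB t f x"
proof -
  define c where "c = (\<Sum>v\<in>B. dg v)"
  have c: "\<forall>v\<in>B. dg v \<le> c" unfolding c_def using B dg_nonneg by (auto intro: member_le_sum)
  have fB: "sA B f" using f AB by (auto simp: sA_def)
  have "exp (c * t) * Hs A lamA phA t f x \<le> exp (c * t) * Hs B lamB phB t f x"
  proof (rule sums_le[OF _ heat_series[OF A EA f(1), of t c x] heat_series[OF B EB fB, of t c x]])
    fix n show "t^n / fact n * (PA A c ^^ n) f x \<le> t^n / fact n * (PA B c ^^ n) f x"
      using PAn_mono[OF AB c f(2)] t by (intro mult_left_mono) auto
  qed
  then show ?thesis by simp
qed

end

definition lin :: "('v,'e) mgraph \<Rightarrow> ('v \<Rightarrow> real) \<Rightarrow> 'e \<Rightarrow> real \<Rightarrow> real" where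
  "lin G g e r = g (p1 G e) + (g (p2 G e) - g (p1 G e)) * r / len G e"

definition Om :: "('v,'e) mgraph \<Rightarrow> ('v \<Rightarrow> real) \<Rightarrow> real \<Rightarrow> ('v,'e) gpoint set" where
  "Om G g \<tau> = {Vx v | v. g v > \<tau>} \<union> {Ept e r | e r. 0 < r \<and> r < len G e \<and> lin G g e r > \<tau>}"

definition eo :: "('v,'e) gpoint \<Rightarrow> 'e" where
  "eo p = (case p of Ept e r \<Rightarrow> e | Vx v \<Rightarrow> undefined)"

context lfg
begin

lemma Vx_Om: "Vx v \<in> Om G g \<tau> \<longleftrightarrow> g v > \<tau>" by (auto simp: Om_def)
lemma Ept_Om: "Ept e r \<in> Om G g \<tau> \<longleftrightarrow> 0 < r \<and> r < len G e \<and> lin G g e r > \<tau>" by (auto simp: Om_def)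

lemma near_est:
  assumes "near_end G e v eps r"
  shows "e \<in> incident G v \<and> \<bar>lin G g e r - g v\<bar> \<le> \<bar>g (p1 G e) - g (p2 G e)\<bar> / len G e * eps"
proof -
  let ?D = "g (p2 G e) - g (p1 G e)" and ?l = "len G e"
  have l: "?l > 0" by (rule len_pos)
  from assms have r: "0 < r" "r < ?l" and c: "(p1 G e = v \<and> r < eps) \<or> (p2 G e = v \<and> ?l - r < eps)"
    by (auto simp: near_end_def p1_def p2_def)
  have inc: "e \<in> incident G v" using c by (auto simp: inc_iff)
  have ab: "\<bar>g (p1 G e) - g (p2 G e)\<bar> = \<bar>?D\<bar>" by simp
  from c show ?thesis
  proof
    assume h: "p1 G e = v \<and> r < eps"
    have "lin G g e r - g v = ?D * (r / ?l)" using h by (simp add: lin_def)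
    then have "\<bar>lin G g e r - g v\<bar> = \<bar>?D\<bar> * (r / ?l)" using r l by (simp add: abs_mult)
    also have "\<dots> \<le> \<bar>?D\<bar> * (eps / ?l)" using h l by (intro mult_left_mono divide_right_mono) auto
    finally show ?thesis using inc by (simp add: ab)
  next
    assume h: "p2 G e = v \<and> ?l - r < eps"
    have "lin G g e r - g v = - ?D * ((?l - r) / ?l)" using h l by (simp add: lin_def field_simps)
    then have "\<bar>lin G g e r - g v\<bar> = \<bar>?D\<bar> * ((?l - r) / ?l)" using r l by (simp add: abs_mult)
    also have "\<dots> \<le> \<bar>?D\<bar> * (eps / ?l)" using h l by (intro mult_left_mono divide_right_mono) auto
    finally show ?thesis using inc by (simp add: ab)
  qed
qed

lemma vertex_ball:
  assumes d: "\<delta> > 0"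
  shows "\<exists>eps>0. \<forall>e r. near_end G e v eps r \<longrightarrow> \<bar>lin G g e r - g v\<bar> < \<delta>"
proof -
  define D where "D = (\<Sum>e\<in>incident G v. \<bar>g (p1 G e) - g (p2 G e)\<bar> / len G e)"
  have D0: "D \<ge> 0" unfolding D_def by (intro sum_nonneg divide_nonneg_nonneg) (auto simp: len_pos less_imp_le)
  define eps where "eps = \<delta> / (1 + D)"
  have ep: "eps > 0" using d D0 by (simp add: eps_def)
  have "\<bar>lin G g e r - g v\<bar> < \<delta>" if ne: "near_end G e v eps r" for e r
  proof -
    from near_est[OF ne, of g] have inc: "e \<in> incident G v"
      and est: "\<bar>lin G g e r - g v\<bar> \<le> \<bar>g (p1 G e) - g (p2 G e)\<bar> / len G e * eps" by auto
    have "\<bar>g (p1 G e) - g (p2 G e)\<bar> / len G e \<le> D"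
      unfolding D_def using inc fin_inc by (intro member_le_sum) (auto simp: len_pos less_imp_le intro!: divide_nonneg_nonneg)
    then have "\<bar>g (p1 G e) - g (p2 G e)\<bar> / len G e * eps \<le> D * eps" using ep by (intro mult_right_mono) auto
    also have "D * eps < \<delta>" using d D0 by (simp add: eps_def field_simps)
    finally show ?thesis using est by linarith
  qed
  then show ?thesis using ep by blast
qed

lemma aux_eq: "(a::real) \<ge> 0 \<Longrightarrow> l > 0 \<Longrightarrow> a * (d * l / (1 + a)) / l = a / (1 + a) * d"
  by (auto simp: divide_simps)

lemma edge_ball:
  assumes d: "\<delta> > 0"
  shows "\<exists>eps>0. \<forall>r'. \<bar>r' - r\<bar> < eps \<longrightarrow> \<bar>lin G g e r' - lin G g e r\<bar> < \<delta>"
proof -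
  let ?D = "g (p2 G e) - g (p1 G e)" and ?l = "len G e"
  have l: "?l > 0" by (rule len_pos)
  define eps where "eps = \<delta> * ?l / (1 + \<bar>?D\<bar>)"
  have ep: "eps > 0" using d l by (simp add: eps_def)
  have "\<bar>lin G g e r' - lin G g e r\<bar> < \<delta>" if h: "\<bar>r' - r\<bar> < eps" for r'
  proof -
    have "lin G g e r' - lin G g e r = ?D * (r' - r) / ?l" using l by (simp add: lin_def field_simps)
    then have "\<bar>lin G g e r' - lin G g e r\<bar> = \<bar>?D\<bar> * \<bar>r' - r\<bar> / ?l" using l by (simp add: abs_mult)
    also have "\<dots> \<le> \<bar>?D\<bar> * eps / ?l" using h l by (intro divide_right_mono mult_left_mono) auto
    also have "\<dots> = \<bar>?D\<bar> / (1 + \<bar>?D\<bar>) * \<delta>" unfolding eps_def using aux_eq[OF abs_ge_zero l] .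
    also have "\<dots> < \<delta>" using d by (simp add: field_simps)
    finally show ?thesis .
  qed
  then show ?thesis using ep by blast
qed

lemma Om_open: "gopen G (Om G g \<tau>)"
  unfolding gopen_def
proof (intro conjI ballI)
  show "Om G g \<tau> \<subseteq> points G" by (auto simp: Om_def points_def)
next
  fix p assume p: "p \<in> Om G g \<tau>"
  show "\<exists>eps>0. nbhd G p eps \<subseteq> Om G g \<tau>"
  proof (cases p)
    case (Vx v)
    then have gv: "g v > \<tau>" using p by (simp add: Vx_Om)
    obtain eps where ep: "eps > 0" and b: "\<forall>e r. near_end G e v eps r \<longrightarrow> \<bar>lin G g e r - g v\<bar> < g v - \<tau>"
      using vertex_ball[of "g v - \<tau>" v g] gv by auto
    have "nbhd G p eps \<subseteq> Om G g \<tau>"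
    proof
      fix q assume "q \<in> nbhd G p eps"
      then consider "q = Vx v" | e s where "q = Ept e s" "near_end G e v eps s" using Vx by auto
      then show "q \<in> Om G g \<tau>"
      proof cases
        case 1 then show ?thesis using gv by (simp add: Vx_Om)
      next
        case 2 then show ?thesis using b by (auto simp: Ept_Om near_end_def abs_less_iff)
      qed
    qed
    then show ?thesis using ep by blast
  next
    case (Ept e r)
    then have h: "0 < r" "r < len G e" "lin G g e r > \<tau>" using p by (auto simp: Ept_Om)
    obtain eps where ep: "eps > 0" and b: "\<forall>r'. \<bar>r' - r\<bar> < eps \<longrightarrow> \<bar>lin G g e r' - lin G g e r\<bar> < lin G g e r - \<tau>"
      using edge_ball[of "lin G g e r - \<tau>" r g e] h by auto
    have "nbhd G p eps \<subseteq> Om G g \<tau>"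
      using b by (auto simp: Ept Ept_Om abs_less_iff)
    then show ?thesis using ep by blast
  qed
qed

lemma Om_bd:
  assumes nv: "\<forall>v. g v \<noteq> \<tau>" and p: "p \<in> gboundary G (Om G g \<tau>)"
  shows "\<exists>e r. p = Ept e r \<and> 0 < r \<and> r < len G e \<and> lin G g e r = \<tau>"
proof -
  from p have pp: "p \<in> points G" "p \<notin> Om G g \<tau>" and nb: "\<forall>eps>0. nbhd G p eps \<inter> Om G g \<tau> \<noteq> {}"
    by (auto simp: gboundary_def)
  show ?thesis
  proof (cases p)
    case (Vx v)
    then have gv: "g v < \<tau>" using pp nv[rule_format, of v] by (auto simp: Vx_Om)
    obtain eps where ep: "eps > 0" and b: "\<forall>e r. near_end G e v eps r \<longrightarrow> \<bar>lin G g e r - g v\<bar> < \<tau> - g v"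
      using vertex_ball[of "\<tau> - g v" v g] gv by auto
    have "nbhd G p eps \<inter> Om G g \<tau> = {}"
    proof (rule ccontr)
      assume "nbhd G p eps \<inter> Om G g \<tau> \<noteq> {}"
      then obtain q where q: "q \<in> nbhd G p eps" "q \<in> Om G g \<tau>" by blast
      then consider "q = Vx v" | e s where "q = Ept e s" "near_end G e v eps s" using Vx by auto
      then show False
      proof cases
        case 1 then show False using q gv by (simp add: Vx_Om)
      next
        case 2
        have "\<bar>lin G g e s - g v\<bar> < \<tau> - g v" using b 2(2) by blast
        then show False using q(2) 2(1) by (simp add: Ept_Om abs_less_iff)
      qed
    qed
    then show ?thesis using nb ep by blast
  next
    case (Ept e r)
    then have r: "0 < r" "r < len G e" using pp by (auto simp: points_def)
    then have le: "lin G g e r \<le> \<tau>" using pp Ept by (auto simp: Ept_Om)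
    show ?thesis
    proof (cases "lin G g e r < \<tau>")
      case True
      obtain eps where ep: "eps > 0" and b: "\<forall>r'. \<bar>r' - r\<bar> < eps \<longrightarrow> \<bar>lin G g e r' - lin G g e r\<bar> < \<tau> - lin G g e r"
        using edge_ball[of "\<tau> - lin G g e r" r g e] True by auto
      have "nbhd G p eps \<inter> Om G g \<tau> = {}"
        using b by (auto simp: Ept Ept_Om abs_less_iff)
      then show ?thesis using nb ep by blast
    next
      case False
      then show ?thesis using le r Ept by auto
    qed
  qed
qed

lemma crossing:
  assumes r: "0 < r" "r < len G e" and l: "lin G g e r = \<tau>" and n1: "g (p1 G e) \<noteq> \<tau>" and n2: "g (p2 G e) \<noteq> \<tau>"
  shows "(g (p1 G e) < \<tau> \<and> \<tau> < g (p2 G e)) \<or> (g (p2 G e) < \<tau> \<and> \<tau> < g (p1 G e))"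
proof -
  define s where "s = r / len G e"
  have s: "0 < s" "s < 1" using r len_pos[of e] by (auto simp: s_def field_simps)
  have "lin G g e r = g (p1 G e) + (g (p2 G e) - g (p1 G e)) * s" by (simp add: lin_def s_def)
  then have eq: "(1 - s) * (g (p1 G e) - \<tau>) + s * (g (p2 G e) - \<tau>) = 0"
    using l by (simp add: algebra_simps)
  have "\<not> (g (p1 G e) < \<tau> \<and> g (p2 G e) < \<tau>)"
  proof
    assume h: "g (p1 G e) < \<tau> \<and> g (p2 G e) < \<tau>"
    have "(1 - s) * (g (p1 G e) - \<tau>) < 0" using h s by (intro mult_pos_neg) auto
    moreover have "s * (g (p2 G e) - \<tau>) < 0" using h s by (intro mult_pos_neg) auto
    ultimately show False using eq by linarith
  qed
  moreover have "\<not> (g (p1 G e) > \<tau> \<and> g (p2 G e) > \<tau>)"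
  proof
    assume h: "g (p1 G e) > \<tau> \<and> g (p2 G e) > \<tau>"
    have "(1 - s) * (g (p1 G e) - \<tau>) > 0" using h s by (intro mult_pos_pos) auto
    moreover have "s * (g (p2 G e) - \<tau>) > 0" using h s by (intro mult_pos_pos) auto
    ultimately show False using eq by linarith
  qed
  ultimately show ?thesis using n1 n2 by linarith
qed

lemma lin_inj:
  assumes "lin G g e r1 = lin G g e r2" "g (p1 G e) \<noteq> g (p2 G e)"
  shows "r1 = r2"
proof -
  have "(g (p2 G e) - g (p1 G e)) * (r1 - r2) / len G e = 0"
    using assms(1) len_pos[of e] by (simp add: lin_def field_simps)
  then show ?thesis using assms(2) len_pos[of e] by simp
qed

definition Cr :: "'v set \<Rightarrow> ('v \<Rightarrow> real) \<Rightarrow> real \<Rightarrow> 'e set" where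
  "Cr A g \<tau> = {e \<in> EA G A. min (g (p1 G e)) (g (p2 G e)) < \<tau> \<and> \<tau> < max (g (p1 G e)) (g (p2 G e))}"

lemma Om_area:
  assumes A: "finite A" and g: "sA A g" and t: "\<tau> > 0" and nv: "\<forall>v. g v \<noteq> \<tau>"
  shows "finite (gboundary G (Om G g \<tau>))" "boundary_area G (Om G g \<tau>) \<le> (\<Sum>e\<in>Cr A g \<tau>. cond G e)"
proof -
  let ?B = "gboundary G (Om G g \<tau>)"
  have bd: "\<exists>e r. p = Ept e r \<and> 0 < r \<and> r < len G e \<and> lin G g e r = \<tau>" if "p \<in> ?B" for p
    using Om_bd[OF nv that] .
  have img: "eo ` ?B \<subseteq> Cr A g \<tau>"
  proof
    fix e assume "e \<in> eo ` ?B"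
    then obtain p where p: "p \<in> ?B" "e = eo p" by auto
    from bd[OF p(1)] obtain r where pr: "p = Ept e r" "0 < r" "r < len G e" "lin G g e r = \<tau>"
      using p(2) by (auto simp: eo_def)
    from crossing[OF pr(2,3,4)] nv have cr: "(g (p1 G e) < \<tau> \<and> \<tau> < g (p2 G e)) \<or> (g (p2 G e) < \<tau> \<and> \<tau> < g (p1 G e))"
      by blast
    then have "p1 G e \<in> A \<or> p2 G e \<in> A" using g t by (auto simp: sA_def)
    then have "e \<in> EA G A" by (auto simp: EA_def inc_iff)
    then show "e \<in> Cr A g \<tau>" using cr by (auto simp: Cr_def)
  qed
  have inj: "inj_on eo ?B"
  proof
    fix p q assume p: "p \<in> ?B" and q: "q \<in> ?B" and eq: "eo p = eo q"
    from bd[OF p] obtain e r where pr: "p = Ept e r" "0 < r" "r < len G e" "lin G g e r = \<tau>" by auto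
    from bd[OF q] obtain e' r' where qr: "q = Ept e' r'" "0 < r'" "r' < len G e'" "lin G g e' r' = \<tau>" by auto
    have ee: "e' = e" using eq pr qr by (simp add: eo_def)
    from crossing[OF pr(2,3,4)] nv have "g (p1 G e) \<noteq> g (p2 G e)" by auto
    then have "r = r'" using lin_inj[of g e r r'] pr(4) qr(4) ee by simp
    then show "p = q" using pr qr ee by simp
  qed
  have fCr: "finite (Cr A g \<tau>)" using fin_EA[OF A] by (simp add: Cr_def)
  show fB: "finite ?B"
    using finite_imageD[OF finite_subset[OF img fCr] inj] .
  have noV: "{v. Vx v \<in> ?B} = {}" using bd by blast
  have allE: "{p \<in> ?B. p \<notin> range Vx} = ?B" using bd by blast
  have "boundary_area G (Om G g \<tau>) = (\<Sum>p\<in>?B. (case p of Ept e s \<Rightarrow> cond G e | Vx v \<Rightarrow> 0))"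
    unfolding boundary_area_def noV allE by simp
  also have "\<dots> = (\<Sum>p\<in>?B. cond G (eo p))"
  proof (rule sum.cong[OF refl])
    fix p assume "p \<in> ?B"
    then obtain e r where "p = Ept e r" using bd by blast
    then show "(case p of Ept e s \<Rightarrow> cond G e | Vx v \<Rightarrow> 0) = cond G (eo p)" by (simp add: eo_def)
  qed
  also have "\<dots> = (\<Sum>e\<in>eo ` ?B. cond G e)" by (simp add: sum.reindex[OF inj])
  also have "\<dots> \<le> (\<Sum>e\<in>Cr A g \<tau>. cond G e)"
    using fCr img cond_pos by (intro sum_mono2) (auto intro: less_imp_le)
  finally show "boundary_area G (Om G g \<tau>) \<le> (\<Sum>e\<in>Cr A g \<tau>. cond G e)" .
qed

end

lemma amgm:
  fixes c l th x y :: real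
  assumes c: "c > 0" and l: "l > 0" and th: "th > 0" and y: "y \<ge> 0"
  shows "c * (\<bar>x\<bar> * y) \<le> th / 2 * (c / l * x^2) + 1 / (2 * th) * (c * l * y^2)"
proof -
  have "0 \<le> (th * \<bar>x\<bar> - l * y)^2" by simp
  then have "2 * th * l * (\<bar>x\<bar> * y) \<le> th^2 * x^2 + l^2 * y^2"
    by (simp add: power2_eq_square algebra_simps abs_mult_self_eq)
  then have "c / (2 * th * l) * (2 * th * l * (\<bar>x\<bar> * y)) \<le> c / (2 * th * l) * (th^2 * x^2 + l^2 * y^2)"
    using c l th by (intro mult_left_mono) auto
  then show ?thesis using c l th by (simp add: field_simps power2_eq_square)
qed

lemma sq_less_iff: "(x::real) \<ge> 0 \<Longrightarrow> s > 0 \<Longrightarrow> s < x^2 \<longleftrightarrow> sqrt s < x"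
  by (metis abs_of_nonneg real_sqrt_abs real_sqrt_less_iff)

lemma less_sq_iff: "(x::real) \<ge> 0 \<Longrightarrow> s > 0 \<Longrightarrow> x^2 < s \<longleftrightarrow> x < sqrt s"
  by (metis abs_of_nonneg real_sqrt_abs real_sqrt_less_iff)

context lfg
begin

lemma T_bound:
  assumes A: "finite A" and g: "sA A g" and pe: "\<And>e. e \<in> incident G (pe e)"
    and cl: "\<And>e. cl e \<ge> 0"
  shows "(\<Sum>e\<in>EA G A. cl e * (g (pe e))^2) \<le> (\<Sum>v\<in>A. (g v)^2 * (\<Sum>e\<in>incident G v. cl e))"
proof -
  have "(\<Sum>e\<in>EA G A. cl e * (g (pe e))^2) = (\<Sum>e\<in>EA G A. \<Sum>v\<in>A. (if pe e = v then cl e * (g v)^2 else 0))"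
  proof (rule sum.cong[OF refl])
    fix e assume "e \<in> EA G A"
    show "cl e * (g (pe e))^2 = (\<Sum>v\<in>A. (if pe e = v then cl e * (g v)^2 else 0))"
      using A g by (cases "pe e \<in> A") (auto simp: sA_def)
  qed
  also have "\<dots> = (\<Sum>v\<in>A. \<Sum>e\<in>EA G A. (if pe e = v then cl e * (g v)^2 else 0))" by (rule sum.swap)
  also have "\<dots> \<le> (\<Sum>v\<in>A. (g v)^2 * (\<Sum>e\<in>incident G v. cl e))"
  proof (rule sum_mono)
    fix v assume v: "v \<in> A"
    have "(\<Sum>e\<in>EA G A. (if pe e = v then cl e * (g v)^2 else 0)) = (\<Sum>e\<in>{e\<in>EA G A. pe e = v}. cl e * (g v)^2)"
      using fin_EA[OF A] by (simp add: sum.inter_filter)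
    also have "\<dots> \<le> (\<Sum>e\<in>incident G v. cl e * (g v)^2)"
      using pe cl fin_inc by (intro sum_mono2) auto
    also have "\<dots> = (g v)^2 * (\<Sum>e\<in>incident G v. cl e)" by (simp add: sum_distrib_right mult_ac)
    finally show "(\<Sum>e\<in>EA G A. (if pe e = v then cl e * (g v)^2 else 0)) \<le> (g v)^2 * (\<Sum>e\<in>incident G v. cl e)" .
  qed
  finally show ?thesis .
qed

lemma S2_bound:
  assumes A: "finite A" and g: "sA A g" and r: "\<forall>v. (\<Sum>e\<in>incident G v. cond G e * len G e) \<le> 2 * r * vmeas G v"
  shows "(\<Sum>e\<in>EA G A. cond G e * len G e * (g (p1 G e) + g (p2 G e))^2) \<le> 8 * r * ip G A g g"
proof -
  have cl: "cond G e * len G e \<ge> 0" for e using cond_pos len_pos by (simp add: less_imp_le)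
  have "(\<Sum>e\<in>EA G A. cond G e * len G e * (g (p1 G e) + g (p2 G e))^2) \<le>
        (\<Sum>e\<in>EA G A. 2 * (cond G e * len G e * (g (p1 G e))^2) + 2 * (cond G e * len G e * (g (p2 G e))^2))"
  proof (rule sum_mono)
    fix e
    have "(g (p1 G e) + g (p2 G e))^2 \<le> 2 * (g (p1 G e))^2 + 2 * (g (p2 G e))^2"
      using sum_squares_bound[of "g (p1 G e)" "g (p2 G e)"] by (simp add: power2_eq_square algebra_simps)
    then have "cond G e * len G e * (g (p1 G e) + g (p2 G e))^2 \<le> cond G e * len G e * (2 * (g (p1 G e))^2 + 2 * (g (p2 G e))^2)"
      using cl by (intro mult_left_mono) auto
    then show "cond G e * len G e * (g (p1 G e) + g (p2 G e))^2 \<le> 2 * (cond G e * len G e * (g (p1 G e))^2) + 2 * (cond G e * len G e * (g (p2 G e))^2)"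
      by (simp add: algebra_simps)
  qed
  also have "\<dots> = 2 * (\<Sum>e\<in>EA G A. cond G e * len G e * (g (p1 G e))^2) + 2 * (\<Sum>e\<in>EA G A. cond G e * len G e * (g (p2 G e))^2)"
    by (simp add: sum.distrib sum_distrib_left)
  also have "\<dots> \<le> 2 * (\<Sum>v\<in>A. (g v)^2 * (\<Sum>e\<in>incident G v. cond G e * len G e)) + 2 * (\<Sum>v\<in>A. (g v)^2 * (\<Sum>e\<in>incident G v. cond G e * len G e))"
    using T_bound[OF A g, of "p1 G" "\<lambda>e. cond G e * len G e"] T_bound[OF A g, of "p2 G" "\<lambda>e. cond G e * len G e"] cl
    by (intro add_mono mult_left_mono) (auto simp: inc_iff)
  also have "\<dots> \<le> 2 * (\<Sum>v\<in>A. (g v)^2 * (2 * r * vmeas G v)) + 2 * (\<Sum>v\<in>A. (g v)^2 * (2 * r * vmeas G v))"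
    using r by (intro add_mono mult_left_mono sum_mono) auto
  also have "\<dots> = 8 * r * ip G A g g"
    by (simp add: ip_def sum_distrib_left power2_eq_square mult_ac)
  finally show ?thesis .
qed

lemma ED_bound:
  assumes A: "finite A" and g: "sA A g" and gn: "\<forall>u. g u \<ge> 0" and th: "th > 0"
    and r: "\<forall>v. (\<Sum>e\<in>incident G v. cond G e * len G e) \<le> 2 * r * vmeas G v"
  shows "(\<Sum>e\<in>EA G A. cond G e * \<bar>(g (p1 G e))^2 - (g (p2 G e))^2\<bar>) \<le> th / 2 * Dform G A g g + 1 / (2 * th) * (8 * r * ip G A g g)"
proof -
  have "(\<Sum>e\<in>EA G A. cond G e * \<bar>(g (p1 G e))^2 - (g (p2 G e))^2\<bar>) \<le>
     (\<Sum>e\<in>EA G A. th / 2 * (ww G e * (g (p1 G e) - g (p2 G e)) * (g (p1 G e) - g (p2 G e))) + 1 / (2 * th) * (cond G e * len G e * (g (p1 G e) + g (p2 G e))^2))"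
  proof (rule sum_mono)
    fix e
    have "\<bar>(g (p1 G e))^2 - (g (p2 G e))^2\<bar> = \<bar>g (p1 G e) - g (p2 G e)\<bar> * (g (p1 G e) + g (p2 G e))"
    proof -
      have "(g (p1 G e))^2 - (g (p2 G e))^2 = (g (p1 G e) - g (p2 G e)) * (g (p1 G e) + g (p2 G e))"
        by (simp add: power2_eq_square algebra_simps)
      then show ?thesis using gn by (simp add: abs_mult)
    qed
    moreover have "cond G e * (\<bar>g (p1 G e) - g (p2 G e)\<bar> * (g (p1 G e) + g (p2 G e))) \<le>
       th / 2 * (cond G e / len G e * (g (p1 G e) - g (p2 G e))^2) + 1 / (2 * th) * (cond G e * len G e * (g (p1 G e) + g (p2 G e))^2)"
      using gn by (intro amgm cond_pos len_pos th) (auto intro: add_nonneg_nonneg)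
    ultimately show "cond G e * \<bar>(g (p1 G e))^2 - (g (p2 G e))^2\<bar> \<le> th / 2 * (ww G e * (g (p1 G e) - g (p2 G e)) * (g (p1 G e) - g (p2 G e))) + 1 / (2 * th) * (cond G e * len G e * (g (p1 G e) + g (p2 G e))^2)"
      by (simp add: ww_def power2_eq_square mult_ac)
  qed
  also have "\<dots> = th / 2 * Dform G A g g + 1 / (2 * th) * (\<Sum>e\<in>EA G A. cond G e * len G e * (g (p1 G e) + g (p2 G e))^2)"
    by (simp add: Dform_def sum.distrib sum_distrib_left)
  also have "\<dots> \<le> th / 2 * Dform G A g g + 1 / (2 * th) * (8 * r * ip G A g g)"
    using S2_bound[OF A g r] th by (intro add_left_mono mult_left_mono) auto
  finally show ?thesis .
qed

end

locale isog = lfg +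
  fixes \<phi> :: "real \<Rightarrow> real"
  assumes phipos: "\<forall>x>0. \<phi> x > 0" and phimono: "mono_on {0<..} \<phi>"
    and iso: "\<forall>\<Omega>. admissible G \<Omega> \<and> vmeas G summable_on {v. Vx v \<in> \<Omega>} \<and> vol G \<Omega> > 0
              \<longrightarrow> boundary_area G \<Omega> \<ge> vol G \<Omega> / \<phi> (vol G \<Omega>)"
begin

lemma iso_Om:
  assumes A: "finite A" and Ab: "A \<inter> bdry G = {}" and g: "sA A g" and t: "\<tau> > 0" and nv: "\<forall>v. g v \<noteq> \<tau>"
    and U: "{v. g v > \<tau>} \<noteq> {}"
  shows "(\<Sum>v\<in>{v. g v > \<tau>}. vmeas G v) / \<phi> (\<Sum>v\<in>{v. g v > \<tau>}. vmeas G v) \<le> (\<Sum>e\<in>Cr A g \<tau>. cond G e)"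
proof -
  let ?O = "Om G g \<tau>" and ?U = "{v. g v > \<tau>}"
  have UA: "?U \<subseteq> A" using g t by (auto simp: sA_def)
  have fU: "finite ?U" using finite_subset[OF UA A] .
  have OU: "{v. Vx v \<in> ?O} = ?U" by (simp add: Vx_Om)
  have adm: "admissible G ?O"
    unfolding admissible_def using Om_open Om_area(1)[OF A g t nv] UA Ab
    by (auto simp: Vx_Om)
  have sm: "vmeas G summable_on {v. Vx v \<in> ?O}" unfolding OU using fU by (rule summable_on_finite)
  have vl: "vol G ?O = (\<Sum>v\<in>?U. vmeas G v)" unfolding vol_def OU using fU by (rule infsum_finite)
  have vp: "vol G ?O > 0" unfolding vl using U fU vm_pos by (intro sum_pos) auto
  from iso adm sm vp have "boundary_area G ?O \<ge> vol G ?O / \<phi> (vol G ?O)" by blast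
  then show ?thesis unfolding vl[symmetric] using Om_area(2)[OF A g t nv] by linarith
qed

definition Lf :: "_ set \<Rightarrow> (_ \<Rightarrow> real) \<Rightarrow> real \<Rightarrow> real \<Rightarrow> real" where
  "Lf A g m s = (\<Sum>v\<in>A. vmeas G v * indicator {0<..<(g v)^2} s) / \<phi> m"

definition Rf :: "_ set \<Rightarrow> (_ \<Rightarrow> real) \<Rightarrow> real \<Rightarrow> real" where
  "Rf A g s = (\<Sum>e\<in>EA G A. cond G e * indicator {min ((g (p1 G e))^2) ((g (p2 G e))^2)<..<max ((g (p1 G e))^2) ((g (p2 G e))^2)} s)"

lemma LR_point:
  assumes A: "finite A" and Ab: "A \<inter> bdry G = {}" and g: "sA A g" and gn: "\<forall>u. g u \<ge> 0"
    and m: "m > 0" and mV: "(\<Sum>v\<in>{v\<in>A. g v \<noteq> 0}. vmeas G v) \<le> m"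
    and s: "s \<notin> (\<lambda>v. (g v)^2) ` A"
  shows "Lf A g m s \<le> Rf A g s"
proof (cases "s > 0")
  case False
  have "Lf A g m s = 0" using False by (simp add: Lf_def indicator_def)
  moreover have "Rf A g s \<ge> 0" unfolding Rf_def by (intro sum_nonneg mult_nonneg_nonneg) (auto simp: less_imp_le cond_pos)
  ultimately show ?thesis by simp
next
  case True
  define \<tau> where "\<tau> = sqrt s"
  have t: "\<tau> > 0" using True by (simp add: \<tau>_def)
  let ?U = "{v. g v > \<tau>}"
  have UA: "?U \<subseteq> A" using g t by (auto simp: sA_def)
  have fU: "finite ?U" using finite_subset[OF UA A] .
  have iff: "s < (g v)^2 \<longleftrightarrow> \<tau> < g v" for v using sq_less_iff[OF _ True] gn by (simp add: \<tau>_def)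
  have iff2: "(g v)^2 < s \<longleftrightarrow> g v < \<tau>" for v using less_sq_iff[OF _ True] gn by (simp add: \<tau>_def)
  have nv: "\<forall>v. g v \<noteq> \<tau>"
  proof
    fix v show "g v \<noteq> \<tau>"
    proof
      assume "g v = \<tau>"
      then have "v \<in> A" using g t by (auto simp: sA_def)
      moreover have "(g v)^2 = s" using \<open>g v = \<tau>\<close> True by (simp add: \<tau>_def)
      ultimately show False using s by force
    qed
  qed
  have L: "Lf A g m s = (\<Sum>v\<in>?U. vmeas G v) / \<phi> m"
  proof -
    have "(\<Sum>v\<in>A. vmeas G v * indicator {0<..<(g v)^2} s) = (\<Sum>v\<in>A. if v \<in> ?U then vmeas G v else 0)"
      using True by (intro sum.cong) (auto simp: indicator_def iff)
    also have "\<dots> = (\<Sum>v\<in>?U. vmeas G v)" using A UA by (simp add: sum.If_cases Int_absorb1 Int_absorb2)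
    finally show ?thesis by (simp add: Lf_def)
  qed
  have R: "Rf A g s = (\<Sum>e\<in>Cr A g \<tau>. cond G e)"
  proof -
    have "Rf A g s = (\<Sum>e\<in>EA G A. if (min (g (p1 G e)) (g (p2 G e)) < \<tau> \<and> \<tau> < max (g (p1 G e)) (g (p2 G e))) then cond G e else 0)"
      unfolding Rf_def by (intro sum.cong) (auto simp: indicator_def iff iff2 min_less_iff_disj less_max_iff_disj)
    also have "\<dots> = (\<Sum>e\<in>Cr A g \<tau>. cond G e)"
      using fin_EA[OF A] by (simp add: Cr_def sum.inter_filter)
    finally show ?thesis .
  qed
  show ?thesis
  proof (cases "?U = {}")
    case True
    then show ?thesis using L R cond_pos by (simp add: sum_nonneg less_imp_le)
  next
    case False
    define W where "W = (\<Sum>v\<in>?U. vmeas G v)"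
    have Wp: "W > 0" unfolding W_def using False fU vm_pos by (intro sum_pos) auto
    have "W \<le> (\<Sum>v\<in>{v\<in>A. g v \<noteq> 0}. vmeas G v)"
      unfolding W_def using A UA t vm_pos by (intro sum_mono2) (auto intro: less_imp_le)
    then have Wm: "W \<le> m" using mV by linarith
    have "\<phi> W \<le> \<phi> m" using phimono Wp m Wm by (auto simp: mono_on_def)
    moreover have "\<phi> W > 0" using phipos Wp by blast
    ultimately have "W / \<phi> m \<le> W / \<phi> W" using Wp by (intro divide_left_mono) auto
    also have "\<dots> \<le> (\<Sum>e\<in>Cr A g \<tau>. cond G e)"
      using iso_Om[OF A Ab g t nv False] by (simp add: W_def)
    finally show ?thesis using L R by (simp add: W_def)
  qed
qed

end

lemma ind_int: "(a::real) \<le> b \<Longrightarrow> integrable lborel (indicator {a<..<b} :: real \<Rightarrow> real)"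
  by (intro integrable_real_indicator) auto

lemma ind_integral: "(a::real) \<le> b \<Longrightarrow> integral\<^sup>L lborel (indicator {a<..<b} :: real \<Rightarrow> real) = b - a"
  by simp

context isog
begin

lemma Lf_int: "integrable lborel (Lf A g m)"
  unfolding Lf_def
  apply (rule integrable_divide_zero)
  apply (rule Bochner_Integration.integrable_sum)
  apply (rule integrable_mult_right)
  apply (rule integrable_real_indicator)
  apply auto
  done

lemma Lf_integral: "integral\<^sup>L lborel (Lf A g m) = (\<Sum>v\<in>A. vmeas G v * (g v)^2) / \<phi> m"
proof -
  have "integral\<^sup>L lborel (Lf A g m) = (\<Sum>v\<in>A. integral\<^sup>L lborel (\<lambda>s. vmeas G v * indicator {0<..<(g v)^2} s)) / \<phi> m"
    unfolding Lf_def by (subst integral_divide_zero, subst Bochner_Integration.integral_sum) (auto intro: ind_int)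
  also have "\<dots> = (\<Sum>v\<in>A. vmeas G v * (g v)^2) / \<phi> m"
    by (simp add: ind_integral)
  finally show ?thesis .
qed

lemma Rf_int: "integrable lborel (Rf A g)"
  unfolding Rf_def
  apply (rule Bochner_Integration.integrable_sum)
  apply (rule integrable_mult_right)
  apply (rule integrable_real_indicator)
  apply auto
  done

lemma Rf_integral: "integral\<^sup>L lborel (Rf A g) = (\<Sum>e\<in>EA G A. cond G e * \<bar>(g (p1 G e))^2 - (g (p2 G e))^2\<bar>)"
proof -
  have "integral\<^sup>L lborel (Rf A g) = (\<Sum>e\<in>EA G A. integral\<^sup>L lborel (\<lambda>s. cond G e * indicator {min ((g (p1 G e))^2) ((g (p2 G e))^2)<..<max ((g (p1 G e))^2) ((g (p2 G e))^2)} s))"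
    unfolding Rf_def by (subst Bochner_Integration.integral_sum) (auto intro: ind_int)
  also have "\<dots> = (\<Sum>e\<in>EA G A. cond G e * \<bar>(g (p1 G e))^2 - (g (p2 G e))^2\<bar>)"
    by (intro sum.cong refl) (simp add: ind_integral abs_if min_def max_def)
  finally show ?thesis .
qed

lemma FK:
  assumes A: "finite A" and Ab: "A \<inter> bdry G = {}" and g: "sA A g" and gn: "\<forall>u. g u \<ge> 0"
    and m: "m > 0" and mV: "(\<Sum>v\<in>{v\<in>A. g v \<noteq> 0}. vmeas G v) \<le> m"
    and r0: "r > 0" and r: "\<forall>v. (\<Sum>e\<in>incident G v. cond G e * len G e) \<le> 2 * r * vmeas G v"
  shows "ip G A g g \<le> 8 * r * (\<phi> m)^2 * Dform G A g g"
proof -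
  have pm: "\<phi> m > 0" using phipos m by blast
  have AE: "AE s in lborel. Lf A g m s \<le> Rf A g s"
  proof -
    have "AE s in lborel. s \<notin> (\<lambda>v. (g v)^2) ` A"
      using A by (intro AE_not_in finite_imp_null_set_lborel) simp
    then show ?thesis by eventually_elim (rule LR_point[OF A Ab g gn m mV])
  qed
  have "ip G A g g / \<phi> m = integral\<^sup>L lborel (Lf A g m)"
    by (simp add: Lf_integral ip_def power2_eq_square mult_ac)
  also have "\<dots> \<le> integral\<^sup>L lborel (Rf A g)"
    by (rule integral_mono_AE[OF Lf_int Rf_int AE])
  also have "\<dots> \<le> (8 * r * \<phi> m) / 2 * Dform G A g g + 1 / (2 * (8 * r * \<phi> m)) * (8 * r * ip G A g g)"
    unfolding Rf_integral using r0 pm by (intro ED_bound[OF A g gn _ r]) simp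
  also have "\<dots> = 4 * r * \<phi> m * Dform G A g g + ip G A g g / (2 * \<phi> m)"
    using r0 pm by (simp add: field_simps)
  finally have "ip G A g g / \<phi> m - ip G A g g / (2 * \<phi> m) \<le> 4 * r * \<phi> m * Dform G A g g" by linarith
  moreover have "ip G A g g / \<phi> m - ip G A g g / (2 * \<phi> m) = ip G A g g / (2 * \<phi> m)"
    using pm by (simp add: field_simps)
  ultimately have "ip G A g g / (2 * \<phi> m) \<le> 4 * r * \<phi> m * Dform G A g g" by simp
  then have "ip G A g g \<le> (4 * r * \<phi> m * Dform G A g g) * (2 * \<phi> m)"
    using pm by (simp add: divide_le_eq)
  then show ?thesis by (simp add: power2_eq_square mult_ac)
qed

end

definition ex :: "'v \<Rightarrow> 'v \<Rightarrow> real" where "ex x = (\<lambda>u. if u = x then 1 else 0)"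
definition oneA :: "'v set \<Rightarrow> 'v \<Rightarrow> real" where "oneA A = (\<lambda>u. if u \<in> A then 1 else 0)"

definition Ival :: "'v set \<Rightarrow> (nat \<Rightarrow> real) \<Rightarrow> (nat \<Rightarrow> 'v \<Rightarrow> real) \<Rightarrow> 'v \<Rightarrow> real \<Rightarrow> real" where
  "Ival A lam ph x \<tau> = (\<Sum>i<card A. exp (- \<tau> * lam i) * (ph i x)^2)"
definition Dv :: "'v set \<Rightarrow> (nat \<Rightarrow> real) \<Rightarrow> (nat \<Rightarrow> 'v \<Rightarrow> real) \<Rightarrow> 'v \<Rightarrow> real \<Rightarrow> real" where
  "Dv A lam ph x \<tau> = (\<Sum>i<card A. lam i * exp (- \<tau> * lam i) * (ph i x)^2)"
definition fv :: "'v set \<Rightarrow> (nat \<Rightarrow> real) \<Rightarrow> (nat \<Rightarrow> 'v \<Rightarrow> real) \<Rightarrow> 'v \<Rightarrow> real \<Rightarrow> 'v \<Rightarrow> real" where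
  "fv A lam ph x \<tau> = (\<lambda>y. \<Sum>i<card A. (exp (- (\<tau>/2) * lam i) * ph i x) * ph i y)"

context lfg
begin

context
  fixes A lam ph
  assumes A: "finite A" and E: "eig A (card A) lam ph"
begin

lemma combo_sA: "sA A (\<lambda>y. \<Sum>i<card A. a i * ph i y)"
  using ph_out[OF A E] by (simp add: sA_def)

lemma combo_ip: "ip G A (\<lambda>y. \<Sum>i<card A. a i * ph i y) (\<lambda>y. \<Sum>i<card A. a i * ph i y) = (\<Sum>i<card A. (a i)^2)"
proof -
  let ?F = "\<lambda>y. \<Sum>i<card A. a i * ph i y"
  have c: "ip G A (ph j) ?F = a j" if j: "j < card A" for j
  proof -
    have "ip G A (ph j) ?F = (\<Sum>i<card A. a i * ip G A (ph j) (ph i))" by (rule ip_sum_right) simp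
    also have "\<dots> = (\<Sum>i<card A. if i = j then a j else 0)"
      by (rule sum.cong[OF refl]) (use j oo[OF A E] in auto)
    also have "\<dots> = a j" using j by simp
    finally show ?thesis .
  qed
  have "ip G A ?F ?F = (\<Sum>j<card A. a j * ip G A ?F (ph j))" by (rule ip_sum_right) simp
  also have "\<dots> = (\<Sum>j<card A. (a j)^2)"
    by (rule sum.cong[OF refl]) (simp add: ip_sym[of A ?F] c power2_eq_square)
  finally show ?thesis .
qed

lemma combo_D: "Dform G A (\<lambda>y. \<Sum>i<card A. a i * ph i y) (\<lambda>y. \<Sum>i<card A. a i * ph i y) = (\<Sum>i<card A. lam i * (a i)^2)"
proof -
  let ?F = "\<lambda>y. \<Sum>i<card A. a i * ph i y"
  have "Dform G A ?F ?F = ip G A ?F (glap G ?F)" using green_ip[OF A combo_sA combo_sA] by simp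
  also have "\<dots> = ip G A ?F (\<lambda>y. \<Sum>i<card A. (a i * lam i) * ph i y)"
    unfolding ip_def
    by (rule sum.cong[OF refl]) (simp add: glap_sum ev[OF A E] mult_ac)
  also have "\<dots> = (\<Sum>i<card A. lam i * (a i)^2)"
  proof -
    have c: "ip G A ?F (ph j) = a j" if j: "j < card A" for j
    proof -
      have "ip G A (ph j) ?F = (\<Sum>i<card A. a i * ip G A (ph j) (ph i))" by (rule ip_sum_right) simp
      also have "\<dots> = (\<Sum>i<card A. if i = j then a j else 0)"
        by (rule sum.cong[OF refl]) (use j oo[OF A E] in auto)
      also have "\<dots> = a j" using j by simp
      finally show ?thesis by (simp add: ip_sym[of A ?F])
    qed
    have "ip G A ?F (\<lambda>y. \<Sum>i<card A. (a i * lam i) * ph i y) = (\<Sum>i<card A. (a i * lam i) * ip G A ?F (ph i))"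
      by (rule ip_sum_right) simp
    also have "\<dots> = (\<Sum>i<card A. lam i * (a i)^2)"
      by (rule sum.cong[OF refl]) (simp add: c power2_eq_square)
    finally show ?thesis .
  qed
  finally show ?thesis .
qed

lemma ip_ex: "x \<in> A \<Longrightarrow> ip G A f (ex x) = vmeas G x * f x"
  using A by (simp add: ip_def ex_def if_distrib cong: if_cong)

lemma ip_oneA: "ip G A f (oneA A) = (\<Sum>u\<in>A. vmeas G u * f u)"
  by (simp add: ip_def oneA_def)

lemma fv_Hs: "x \<in> A \<Longrightarrow> fv A lam ph x \<tau> y = Hs A lam ph (\<tau>/2) (ex x) y / vmeas G x"
  using vm_pos[of x] by (simp add: fv_def Hs_def ip_ex sum_divide_distrib mult_ac)

lemma fv_combo: "fv A lam ph x \<tau> = (\<lambda>y. \<Sum>i<card A. (exp (- (\<tau>/2) * lam i) * ph i x) * ph i y)"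
  by (simp add: fv_def)

lemma fv_sA: "sA A (fv A lam ph x \<tau>)" unfolding fv_combo by (rule combo_sA)

lemma fv_ip: "ip G A (fv A lam ph x \<tau>) (fv A lam ph x \<tau>) = Ival A lam ph x \<tau>"
  unfolding fv_combo combo_ip Ival_def
  by (rule sum.cong[OF refl]) (simp add: power_mult_distrib exp_of_nat_mult[symmetric] power2_eq_square mult_exp_exp)

lemma fv_D: "Dform G A (fv A lam ph x \<tau>) (fv A lam ph x \<tau>) = Dv A lam ph x \<tau>"
  unfolding fv_combo combo_D Dv_def
  by (rule sum.cong[OF refl]) (simp add: power_mult_distrib power2_eq_square mult_exp_exp mult_ac)

lemma fv_nonneg:
  assumes x: "x \<in> A" and t: "\<tau> \<ge> 0"
  shows "fv A lam ph x \<tau> y \<ge> 0"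
proof -
  define c where "c = (\<Sum>v\<in>A. dg v)"
  have c: "\<forall>v\<in>A. dg v \<le> c" unfolding c_def using A dg_nonneg by (auto intro: member_le_sum)
  have "Hs A lam ph (\<tau>/2) (ex x) y \<ge> 0"
    using x t by (intro Hs_nonneg[OF A E c]) (auto simp: sA_def ex_def)
  then show ?thesis using vm_pos[of x] x by (simp add: fv_Hs)
qed

lemma fv_L1:
  assumes x: "x \<in> A" and t: "\<tau> \<ge> 0"
  shows "(\<Sum>y\<in>A. vmeas G y * fv A lam ph x \<tau> y) \<le> 1"
proof -
  define c where "c = (\<Sum>v\<in>A. dg v)"
  have c: "\<forall>v\<in>A. dg v \<le> c" "c \<ge> 0" unfolding c_def using A dg_nonneg by (auto intro: member_le_sum sum_nonneg)
  have "(\<Sum>y\<in>A. vmeas G y * fv A lam ph x \<tau> y) = Hs A lam ph (\<tau>/2) (oneA A) x"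
  proof -
    have "(\<Sum>y\<in>A. vmeas G y * fv A lam ph x \<tau> y) = (\<Sum>y\<in>A. \<Sum>i<card A. vmeas G y * ((exp (- (\<tau>/2) * lam i) * ph i x) * ph i y))"
      unfolding fv_def by (simp add: sum_distrib_left)
    also have "\<dots> = (\<Sum>i<card A. \<Sum>y\<in>A. vmeas G y * ((exp (- (\<tau>/2) * lam i) * ph i x) * ph i y))"
      by (rule sum.swap)
    also have "\<dots> = Hs A lam ph (\<tau>/2) (oneA A) x"
      unfolding Hs_def ip_oneA by (rule sum.cong[OF refl]) (simp add: sum_distrib_left sum_distrib_right mult_ac)
    finally show ?thesis .
  qed
  also have "\<dots> \<le> 1"
    using t by (intro Hs_le1[OF A E c]) (auto simp: sA_def oneA_def)
  finally show ?thesis .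
qed

lemma sumsq_x: "x \<in> A \<Longrightarrow> (\<Sum>i<card A. (ph i x)^2) = 1 / vmeas G x"
proof -
  assume x: "x \<in> A"
  have o: "orthn A (card A) ph" using E by (simp add: eig_def)
  have "ex x x = (\<Sum>i<card A. ip G A (ph i) (ex x) * ph i x)" by (rule complete[OF A o x])
  moreover have "ex x x = 1" by (simp add: ex_def)
  ultimately have "1 = (\<Sum>i<card A. ip G A (ph i) (ex x) * ph i x)" by simp
  also have "\<dots> = vmeas G x * (\<Sum>i<card A. (ph i x)^2)"
    by (simp add: ip_ex[OF x] sum_distrib_left power2_eq_square mult_ac)
  finally have "1 = vmeas G x * (\<Sum>i<card A. (ph i x)^2)" .
  then show ?thesis using vm_pos[of x] by (simp add: field_simps)
qed

lemma Ival_pos: "x \<in> A \<Longrightarrow> Ival A lam ph x \<tau> > 0"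
proof -
  assume x: "x \<in> A"
  have "(\<Sum>i<card A. (ph i x)^2) > 0" using sumsq_x[OF x] vm_pos[of x] by simp
  have "\<exists>i<card A. ph i x \<noteq> 0"
  proof (rule ccontr)
    assume "\<not> (\<exists>i<card A. ph i x \<noteq> 0)"
    then have "(\<Sum>i<card A. (ph i x)^2) = 0" by simp
    with \<open>(\<Sum>i<card A. (ph i x)^2) > 0\<close> show False by simp
  qed
  then obtain i where i: "i < card A" "ph i x \<noteq> 0" by blast
  show ?thesis unfolding Ival_def
    by (rule sum_pos2[of _ i]) (use i in auto)
qed

lemma Ival_le: "x \<in> A \<Longrightarrow> \<tau> \<ge> 0 \<Longrightarrow> Ival A lam ph x \<tau> \<le> 1 / vmeas G x"
proof -
  assume x: "x \<in> A" and t: "\<tau> \<ge> 0"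
  define c where "c = (\<Sum>v\<in>A. dg v)"
  have c: "\<forall>v\<in>A. dg v \<le> c" "c \<ge> 0" unfolding c_def using A dg_nonneg by (auto intro: member_le_sum sum_nonneg)
  have "Hs A lam ph \<tau> (ex x) x \<le> 1"
    using t by (intro Hs_le1[OF A E c]) (auto simp: sA_def ex_def x)
  moreover have "Hs A lam ph \<tau> (ex x) x = vmeas G x * Ival A lam ph x \<tau>"
    using x by (simp add: Hs_def Ival_def ip_ex sum_distrib_left power2_eq_square mult_ac)
  ultimately show ?thesis using vm_pos[of x] by (simp add: field_simps)
qed

end
end

context isog
begin

lemma nash:
  assumes A: "finite A" and E: "eig A (card A) lam ph" and Ab: "A \<inter> bdry G = {}" and x: "x \<in> A" and t: "\<tau> \<ge> 0"
    and r0: "r > 0" and r: "\<forall>v. (\<Sum>e\<in>incident G v. cond G e * len G e) \<le> 2 * r * vmeas G v"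
  shows "Dv A lam ph x \<tau> \<ge> Ival A lam ph x \<tau> / (16 * r * (\<phi> (4 / Ival A lam ph x \<tau>))^2)"
proof -
  define J where "J = Ival A lam ph x \<tau>"
  define f where "f = fv A lam ph x \<tau>"
  have Jp: "J > 0" using Ival_pos[OF A E x] by (simp add: J_def)
  have fn: "\<forall>u. f u \<ge> 0" using fv_nonneg[OF A E x t] by (simp add: f_def)
  have fA: "sA A f" using fv_sA[OF A E] by (simp add: f_def)
  have fL1: "(\<Sum>y\<in>A. vmeas G y * f y) \<le> 1" using fv_L1[OF A E x t] by (simp add: f_def)
  have fip: "ip G A f f = J" using fv_ip[OF A E] by (simp add: f_def J_def)
  have fD: "Dform G A f f = Dv A lam ph x \<tau>" using fv_D[OF A E] by (simp add: f_def)
  define s0 where "s0 = J / 4"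
  have s0: "s0 > 0" using Jp by (simp add: s0_def)
  define h where "h u = max (f u - s0) 0" for u
  have hn: "\<forall>u. h u \<ge> 0" by (simp add: h_def)
  have hA: "sA A h" using fA s0 by (auto simp: sA_def h_def)
  have hsq: "(h u)^2 \<ge> (f u)^2 - 2 * s0 * f u" for u
  proof (cases "f u \<ge> s0")
    case True then show ?thesis by (simp add: h_def power2_eq_square algebra_simps)
  next
    case False
    then have "(f u)^2 - 2 * s0 * f u \<le> 0" using fn by (simp add: power2_eq_square) (smt (verit) mult_right_mono)
    moreover have "h u = 0" using False by (simp add: h_def)
    ultimately show ?thesis by simp
  qed
  have hip: "ip G A h h \<ge> J / 2"
  proof -
    have "ip G A h h \<ge> (\<Sum>u\<in>A. vmeas G u * ((f u)^2 - 2 * s0 * f u))"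
      unfolding ip_def using vm_pos hsq by (intro sum_mono) (simp add: mult.assoc power2_eq_square mult_left_mono less_imp_le)
    also have "(\<Sum>u\<in>A. vmeas G u * ((f u)^2 - 2 * s0 * f u)) = ip G A f f - 2 * s0 * (\<Sum>y\<in>A. vmeas G y * f y)"
      by (simp add: ip_def sum_subtractf sum_distrib_left algebra_simps power2_eq_square)
    also have "\<dots> \<ge> J - 2 * s0 * 1" using fL1 s0 fip by (simp add: mult_left_mono)
    finally show ?thesis by (simp add: s0_def)
  qed
  have hD: "Dform G A h h \<le> Dform G A f f"
    unfolding Dform_def
  proof (rule sum_mono)
    fix e
    have "\<bar>h (p1 G e) - h (p2 G e)\<bar> \<le> \<bar>f (p1 G e) - f (p2 G e)\<bar>" by (simp add: h_def)
    then have "(h (p1 G e) - h (p2 G e))^2 \<le> (f (p1 G e) - f (p2 G e))^2"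
      by (metis abs_ge_zero power2_abs power_mono)
    then show "ww G e * (h (p1 G e) - h (p2 G e)) * (h (p1 G e) - h (p2 G e)) \<le> ww G e * (f (p1 G e) - f (p2 G e)) * (f (p1 G e) - f (p2 G e))"
      using ww_pos[of e] by (simp add: power2_eq_square mult.assoc mult_left_mono)
  qed
  have hV: "(\<Sum>v\<in>{v\<in>A. h v \<noteq> 0}. vmeas G v) \<le> 4 / J"
  proof -
    have "(\<Sum>v\<in>{v\<in>A. h v \<noteq> 0}. vmeas G v) \<le> (\<Sum>v\<in>{v\<in>A. h v \<noteq> 0}. vmeas G v * f v / s0)"
    proof (rule sum_mono)
      fix v assume "v \<in> {v\<in>A. h v \<noteq> 0}"
      then have "f v > s0" by (auto simp: h_def max_def split: if_splits)
      then have "f v / s0 \<ge> 1" using s0 by simp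
      then show "vmeas G v \<le> vmeas G v * f v / s0" using vm_pos[of v]
        by (metis mult.right_neutral mult_left_mono less_imp_le times_divide_eq_right)
    qed
    also have "\<dots> \<le> (\<Sum>v\<in>A. vmeas G v * f v / s0)"
      using A by (intro sum_mono2) (auto simp: fn s0 intro!: divide_nonneg_pos mult_nonneg_nonneg vm_pos[THEN less_imp_le])
    also have "\<dots> = (\<Sum>v\<in>A. vmeas G v * f v) / s0" by (simp add: sum_divide_distrib)
    also have "\<dots> \<le> 1 / s0" using fL1 s0 by (simp add: divide_right_mono)
    also have "\<dots> = 4 / J" by (simp add: s0_def)
    finally show ?thesis .
  qed
  have m: "4 / J > 0" using Jp by simp
  have "ip G A h h \<le> 8 * r * (\<phi> (4 / J))^2 * Dform G A h h"
    by (rule FK[OF A Ab hA hn m hV r0 r])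
  then have "J / 2 \<le> 8 * r * (\<phi> (4 / J))^2 * Dform G A f f"
    using hip hD r0 by (smt (verit) mult_left_mono mult_nonneg_nonneg zero_le_power2)
  moreover have "\<phi> (4 / J) > 0" using phipos m by blast
  ultimately have "J / (16 * r * (\<phi> (4 / J))^2) \<le> Dform G A f f"
    using r0 by (simp add: field_simps)
  then show ?thesis by (simp add: fD J_def)
qed

end

context isog
begin

definition Fz :: "real \<Rightarrow> ennreal" where
  "Fz y = (\<integral>\<^sup>+ u \<in> {y<..}. ennreal ((\<phi> (4 / u))\<^sup>2 / u) \<partial>lborel)"

lemma Fz_anti: "y \<le> z \<Longrightarrow> Fz z \<le> Fz y"
  unfolding Fz_def by (intro nn_integral_mono) (auto split: split_indicator)

lemma Dv_nonneg: "finite A \<Longrightarrow> eig A (card A) lam ph \<Longrightarrow> Dv A lam ph x \<tau> \<ge> 0"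
  using fv_D Dform_nonneg by metis

lemma ode:
  assumes A: "finite A" and E: "eig A (card A) lam ph" and Ab: "A \<inter> bdry G = {}" and x: "x \<in> A" and t: "t > 0"
    and r0: "r > 0" and r: "\<forall>v. (\<Sum>e\<in>incident G v. cond G e * len G e) \<le> 2 * r * vmeas G v"
  shows "Fz (Ival A lam ph x t) \<ge> ennreal (t / (16 * r))"
proof -
  let ?I = "Ival A lam ph x"
  define g where "g \<sigma> = ?I (t - \<sigma>)" for \<sigma>
  define g' where "g' \<sigma> = Dv A lam ph x (t - \<sigma>)" for \<sigma>
  define a0 where "a0 = ?I t"
  have a0: "a0 > 0" using Ival_pos[OF A E x] by (simp add: a0_def)
  have derI: "(?I has_real_derivative - Dv A lam ph x \<tau>) (at \<tau>)" for \<tau>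
    unfolding Ival_def Dv_def
    by (auto intro!: derivative_eq_intros simp: sum_negf[symmetric] mult_ac)
  have derg: "(g has_real_derivative g' \<sigma>) (at \<sigma>)" for \<sigma>
  proof -
    have "((\<lambda>\<sigma>. ?I (t - \<sigma>)) has_real_derivative (- Dv A lam ph x (t - \<sigma>)) * (- 1)) (at \<sigma>)"
      by (rule DERIV_chain2[OF derI]) (auto intro!: derivative_eq_intros)
    then show ?thesis unfolding g_def g'_def by simp
  qed
  have contg': "continuous_on {0..t} g'"
    unfolding g'_def Dv_def by (intro continuous_intros)
  have g'nn: "g' \<sigma> \<ge> 0" for \<sigma> using Dv_nonneg[OF A E] by (simp add: g'_def)
  have Imono: "?I b \<le> ?I a" if "a \<le> b" for a b
    using that by (intro DERIV_nonpos_imp_nonincreasing[of a b ?I]) (use derI Dv_nonneg[OF A E] in \<open>auto intro!: exI\<close>)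
  define psi where "psi u = \<phi> (4 / max u a0)" for u
  have psi_mono: "mono (\<lambda>u. - psi u)"
  proof (rule monoI)
    fix u v :: real assume "u \<le> v"
    then have "4 / max v a0 \<le> 4 / max u a0" using a0 by (intro divide_left_mono) (auto simp: max_def)
    moreover have "4 / max v a0 > 0" "4 / max u a0 > 0" using a0 by auto
    ultimately have "\<phi> (4 / max v a0) \<le> \<phi> (4 / max u a0)" using phimono by (auto simp: mono_on_def)
    then show "- psi u \<le> - psi v" by (simp add: psi_def)
  qed
  have Mpsi: "psi \<in> borel_measurable borel"
  proof -
    have "(\<lambda>u. - psi u) \<in> borel_measurable borel" by (rule borel_measurable_mono[OF psi_mono])
    then have "(\<lambda>u. - (- psi u)) \<in> borel_measurable borel" by measurable
    then show ?thesis by simp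
  qed
  define k where "k u = ennreal ((psi u)\<^sup>2 / max u a0)" for u
  have Mk: "k \<in> borel_measurable borel" unfolding k_def using Mpsi by measurable
  have sub: "(\<integral>\<^sup>+u. k u * indicator {g 0..g t} u \<partial>lborel) = (\<integral>\<^sup>+\<sigma>. k (g \<sigma>) * ennreal (g' \<sigma>) * indicator {0..t} \<sigma> \<partial>lborel)"
    by (rule nn_integral_substitution_aux[OF Mk _ derg contg' g'nn t]) simp
  have lower: "ennreal (1 / (16 * r)) * indicator {0..t} \<sigma> \<le> k (g \<sigma>) * ennreal (g' \<sigma>) * indicator {0..t} \<sigma>" for \<sigma>
  proof (cases "\<sigma> \<in> {0..t}")
    case True
    define J where "J = ?I (t - \<sigma>)"
    have Jp: "J > 0" using Ival_pos[OF A E x] by (simp add: J_def)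
    have Ja: "a0 \<le> J" unfolding J_def a0_def using True by (intro Imono) auto
    have kg: "k (g \<sigma>) = ennreal ((\<phi> (4 / J))\<^sup>2 / J)"
      using Ja by (simp add: k_def psi_def g_def J_def[symmetric] max_def)
    have na: "Dv A lam ph x (t - \<sigma>) \<ge> J / (16 * r * (\<phi> (4 / J))^2)"
      unfolding J_def using True by (intro nash[OF A E Ab x _ r0 r]) auto
    have pp: "\<phi> (4 / J) > 0" using phipos Jp by simp
    have "1 / (16 * r) = ((\<phi> (4 / J))\<^sup>2 / J) * (J / (16 * r * (\<phi> (4 / J))^2))"
      using Jp pp r0 by (simp add: field_simps)
    also have "\<dots> \<le> ((\<phi> (4 / J))\<^sup>2 / J) * g' \<sigma>"
      using na Jp by (intro mult_left_mono) (auto simp: g'_def)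
    finally have "ennreal (1 / (16 * r)) \<le> ennreal (((\<phi> (4 / J))\<^sup>2 / J) * g' \<sigma>)" by (rule ennreal_leI)
    also have "\<dots> = k (g \<sigma>) * ennreal (g' \<sigma>)" using Jp g'nn[of \<sigma>] ennreal_mult[of "(\<phi> (4 / J))\<^sup>2 / J" "g' \<sigma>"] by (simp add: kg)
    finally show ?thesis using True by simp
  qed simp
  have "ennreal (t / (16 * r)) = (\<integral>\<^sup>+\<sigma>. ennreal (1 / (16 * r)) * indicator {0..t} \<sigma> \<partial>lborel)"
    using t r0 by (simp add: nn_integral_cmult_indicator ennreal_mult[symmetric])
  also have "\<dots> \<le> (\<integral>\<^sup>+\<sigma>. k (g \<sigma>) * ennreal (g' \<sigma>) * indicator {0..t} \<sigma> \<partial>lborel)"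
    by (intro nn_integral_mono lower)
  also have "\<dots> = (\<integral>\<^sup>+u. k u * indicator {g 0..g t} u \<partial>lborel)" by (rule sub[symmetric])
  also have "\<dots> \<le> Fz a0"
  proof -
    have "AE u in lborel. k u * indicator {g 0..g t} u \<le> ennreal ((\<phi> (4 / u))\<^sup>2 / u) * indicator {a0<..} u"
      using AE_lborel_singleton[of a0]
    proof eventually_elim
      case (elim u)
      show ?case
      proof (cases "u \<in> {g 0..g t}")
        case True
        then have "a0 \<le> u" by (simp add: g_def a0_def)
        then have "a0 < u" using elim by simp
        then show ?thesis using a0 True by (simp add: k_def psi_def max_def)
      qed simp
    qed
    then show ?thesis unfolding Fz_def by (rule nn_integral_mono_AE)
  qed
  finally show ?thesis by (simp add: a0_def)
qed

end

lemma mono_net_tendsto: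
  fixes f :: "'a set \<Rightarrow> real"
  assumes mono: "\<And>A B. finite B \<Longrightarrow> B \<subseteq> S \<Longrightarrow> A \<subseteq> B \<Longrightarrow> f A \<le> f B"
    and bd: "\<And>A. finite A \<Longrightarrow> A \<subseteq> S \<Longrightarrow> f A \<le> M"
  shows "(f \<longlongrightarrow> (SUP A\<in>{A. finite A \<and> A \<subseteq> S}. f A)) (finite_subsets_at_top S)"
proof (rule order_tendstoI)
  let ?I = "{A. finite A \<and> A \<subseteq> S}"
  have ne: "?I \<noteq> {}" by auto
  have bdd: "bdd_above (f ` ?I)" using bd by (auto intro!: bdd_aboveI)
  fix a
  show "a < (SUP A\<in>?I. f A) \<Longrightarrow> eventually (\<lambda>A. a < f A) (finite_subsets_at_top S)"
  proof -
    assume "a < (SUP A\<in>?I. f A)"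
    then obtain A0 where A0: "A0 \<in> ?I" "a < f A0" using less_cSUP_iff[OF ne bdd] by blast
    show ?thesis unfolding eventually_finite_subsets_at_top
      using A0 mono by (intro exI[of _ A0]) (auto intro: less_le_trans)
  qed
  show "(SUP A\<in>?I. f A) < a \<Longrightarrow> eventually (\<lambda>A. f A < a) (finite_subsets_at_top S)"
  proof -
    assume h: "(SUP A\<in>?I. f A) < a"
    show ?thesis
    proof (rule eventually_finite_subsets_at_top_weakI)
      fix X assume "finite X" "X \<subseteq> S"
      then have "f X \<le> (SUP A\<in>?I. f A)" by (intro cSUP_upper[OF _ bdd]) auto
      then show "f X < a" using h by simp
    qed
  qed
qed

context lfg
begin

definition lamS :: "_ set \<Rightarrow> nat \<Rightarrow> real" where
  "lamS A = fst (SOME B. is_eigenbasis G A (fst B) (snd B))"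
definition phS :: "_ set \<Rightarrow> nat \<Rightarrow> _ \<Rightarrow> real" where
  "phS A = snd (SOME B. is_eigenbasis G A (fst B) (snd B))"

lemma hk_eig: "finite A \<Longrightarrow> eig A (card A) (lamS A) (phS A)"
proof -
  assume A: "finite A"
  from eigenbasis_exists[OF A] obtain lam ph where "is_eigenbasis G A lam ph" by blast
  then have "\<exists>B. is_eigenbasis G A (fst B) (snd B)" by (intro exI[of _ "(lam, ph)"]) simp
  then have "is_eigenbasis G A (lamS A) (phS A)" unfolding lamS_def phS_def by (rule someI_ex)
  then show ?thesis by (rule eigenbasis_is_eig)
qed

lemma hk_Ival: "heatK_fin G A x x t = Ival A (lamS A) (phS A) x t"
  by (simp add: heatK_fin_def Ival_def Let_def lamS_def phS_def power2_eq_square mult_ac)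

lemma Ival_nonneg: "Ival A lam ph x \<tau> \<ge> 0"
  unfolding Ival_def by (intro sum_nonneg) simp

lemma Ival_out: "finite A \<Longrightarrow> eig A (card A) lam ph \<Longrightarrow> x \<notin> A \<Longrightarrow> Ival A lam ph x \<tau> = 0"
proof -
  assume A: "finite A" and E: "eig A (card A) lam ph" and x: "x \<notin> A"
  have "\<forall>i<card A. ph i x = 0" using ph_out[OF A E] x by blast
  then show ?thesis by (simp add: Ival_def)
qed

lemma ip_ex2: "finite A \<Longrightarrow> x \<in> A \<Longrightarrow> ip G A f (ex x) = vmeas G x * f x"
  by (simp add: ip_def ex_def if_distrib cong: if_cong)

lemma Hs_ex: "finite A \<Longrightarrow> x \<in> A \<Longrightarrow> Hs A lam ph \<tau> (ex x) x = vmeas G x * Ival A lam ph x \<tau>"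
  by (simp add: Hs_def Ival_def ip_ex2 sum_distrib_left power2_eq_square mult_ac)

lemma KA_mono:
  assumes B: "finite B" and AB: "A \<subseteq> B" and t: "t \<ge> 0"
  shows "heatK_fin G A x x t \<le> heatK_fin G B x x t"
proof -
  have A: "finite A" using finite_subset[OF AB B] .
  note EA = hk_eig[OF A] and EB = hk_eig[OF B]
  show ?thesis
  proof (cases "x \<in> A")
    case True
    have "Hs A (lamS A) (phS A) t (ex x) x \<le> Hs B (lamS B) (phS B) t (ex x) x"
      using True t by (intro Hs_mono[OF A EA B EB AB]) (auto simp: sA_def ex_def)
    then have "vmeas G x * Ival A (lamS A) (phS A) x t \<le> vmeas G x * Ival B (lamS B) (phS B) x t"
      using True AB by (simp add: Hs_ex[OF A] Hs_ex[OF B] subsetD)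
    then show ?thesis using vm_pos[of x] by (simp add: hk_Ival)
  next
    case False
    then show ?thesis by (simp add: hk_Ival Ival_out[OF A EA] Ival_nonneg)
  qed
qed

lemma KA_bound:
  assumes A: "finite A" and t: "t \<ge> 0"
  shows "heatK_fin G A x x t \<le> 1 / vmeas G x"
proof (cases "x \<in> A")
  case True
  then show ?thesis using Ival_le[OF A hk_eig[OF A] True t] by (simp add: hk_Ival)
next
  case False
  then show ?thesis using vm_pos[of x] by (simp add: hk_Ival Ival_out[OF A hk_eig[OF A]])
qed

lemma rho_bound:
  assumes "rho_sup G = ennreal r0" "r0 \<ge> 0"
  shows "(\<Sum>e\<in>incident G v. cond G e * len G e) \<le> 2 * r0 * vmeas G v"
proof -
  have "ennreal ((\<Sum>e\<in>incident G v. cond G e * len G e / 2) / vmeas G v) \<le> rho_sup G"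
    unfolding rho_sup_def by (rule SUP_upper) simp
  then have "(\<Sum>e\<in>incident G v. cond G e * len G e / 2) / vmeas G v \<le> r0"
    using assms by (simp add: ennreal_le_iff)
  then have "(\<Sum>e\<in>incident G v. cond G e * len G e) / 2 \<le> r0 * vmeas G v"
    using vm_pos[of v] by (simp add: sum_divide_distrib[symmetric] divide_le_eq)
  then show ?thesis by simp
qed

end

context isog
begin

lemma Fz_pos: assumes y: "y > 0" shows "Fz y > 0"
proof -
  define c0 where "c0 = (\<phi> (4 / (y + 1)))\<^sup>2 / (y + 1)"
  have p: "\<phi> (4 / (y + 1)) > 0" using phipos y by simp
  have c0: "c0 > 0" using p y by (simp add: c0_def)
  have "ennreal c0 = (\<integral>\<^sup>+ u. ennreal c0 * indicator {y<..<y+1} u \<partial>lborel)"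
    by (simp add: nn_integral_cmult_indicator)
  also have "\<dots> \<le> Fz y"
    unfolding Fz_def
  proof (intro nn_integral_mono)
    fix u
    show "ennreal c0 * indicator {y<..<y+1} u \<le> ennreal ((\<phi> (4 / u))\<^sup>2 / u) * indicator {y<..} u"
    proof (cases "u \<in> {y<..<y+1}")
      case True
      then have u: "y < u" "u < y + 1" by auto
      have "4 / (y + 1) \<le> 4 / u" using u y by (intro divide_left_mono) auto
      then have "\<phi> (4 / (y + 1)) \<le> \<phi> (4 / u)" using phimono u y by (auto simp: mono_on_def)
      then have "(\<phi> (4 / (y + 1)))\<^sup>2 \<le> (\<phi> (4 / u))\<^sup>2" using p by (intro power_mono) auto
      moreover have "1 / (y + 1) \<le> 1 / u" using u y by (intro divide_left_mono) auto
      ultimately have "c0 \<le> (\<phi> (4 / u))\<^sup>2 / u" unfolding c0_def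
        using y u by (smt (verit) divide_right_mono frac_le zero_le_power2)
      then show ?thesis using True u by (simp add: ennreal_leI)
    qed simp
  qed
  finally show ?thesis using c0 by (metis ennreal_less_zero_iff order_less_le_trans)
qed

lemma rho0_impossible:
  assumes rho: "rho_sup G = 0" and x: "x \<notin> bdry G"
  shows False
proof -
  have r: "\<forall>v. (\<Sum>e\<in>incident G v. cond G e * len G e) \<le> 2 * r * vmeas G v" if r0: "r > 0" for r
  proof
    fix v
    have "(\<Sum>e\<in>incident G v. cond G e * len G e) \<le> 2 * 0 * vmeas G v"
      using rho_bound[of 0 v] rho by simp
    also have "\<dots> \<le> 2 * r * vmeas G v" using r0 vm_pos[of v] by simp
    finally show "(\<Sum>e\<in>incident G v. cond G e * len G e) \<le> 2 * r * vmeas G v" .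
  qed
  define D0 where "D0 = Dform G {x} (ex x) (ex x)"
  have D0: "D0 \<ge> 0" unfolding D0_def by (rule Dform_nonneg)
  have p: "\<phi> (vmeas G x) > 0" using phipos vm_pos[of x] by blast
  define r where "r = vmeas G x / (16 * (\<phi> (vmeas G x))^2 * D0 + 1)"
  have rp: "r > 0" using vm_pos[of x] D0 p by (simp add: r_def add_nonneg_pos)
  have "ip G {x} (ex x) (ex x) \<le> 8 * r * (\<phi> (vmeas G x))^2 * Dform G {x} (ex x) (ex x)"
    using x vm_pos[of x] by (intro FK[OF _ _ _ _ _ _ rp r[OF rp]]) (auto simp: sA_def ex_def)
  then have "vmeas G x \<le> 8 * r * (\<phi> (vmeas G x))^2 * D0" by (simp add: ip_def ex_def D0_def)
  also have "\<dots> = vmeas G x * (8 * (\<phi> (vmeas G x))^2 * D0 / (16 * (\<phi> (vmeas G x))^2 * D0 + 1))"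
    by (simp add: r_def)
  also have "\<dots> < vmeas G x * 1"
    using vm_pos[of x] D0 p by (intro mult_strict_left_mono) (auto simp: divide_less_eq add_nonneg_pos)
  finally show False by simp
qed

lemma KA_le_y:
  assumes A: "finite A" and Ab: "A \<inter> bdry G = {}" and t: "t > 0" and y: "y > 0"
    and Fy: "Fz y \<le> 1 / (32 * rho_sup G) * ennreal t"
  shows "heatK_fin G A x x t \<le> y"
proof (cases "x \<in> A")
  case False
  then show ?thesis using y by (simp add: hk_Ival Ival_out[OF A hk_eig[OF A]])
next
  case True
  note E = hk_eig[OF A]
  show ?thesis
  proof (cases "rho_sup G" rule: ennreal_cases)
    case top
    then show ?thesis using Fy Fz_pos[OF y] by simp
  next
    case (real r0)
    show ?thesis
    proof (cases "r0 = 0")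
      case True
      then have "rho_sup G = 0" using real by simp
      then show ?thesis using rho0_impossible[of x] True \<open>x \<in> A\<close> Ab by auto
    next
      case False
      then have r0: "r0 > 0" using real by simp
      have rb: "\<forall>v. (\<Sum>e\<in>incident G v. cond G e * len G e) \<le> 2 * r0 * vmeas G v"
        using rho_bound real by auto
      have Ct: "1 / (32 * rho_sup G) * ennreal t = ennreal (t / (32 * r0))"
      proof -
        have "32 * ennreal r0 = ennreal (32 * r0)" using r0 by (simp add: ennreal_mult' ennreal_numeral[symmetric] del: ennreal_numeral)
        then have "1 / (32 * ennreal r0) = ennreal (1 / (32 * r0))"
          using r0 by (simp add: divide_ennreal[symmetric])
        then show ?thesis using r0 t real by (simp add: ennreal_mult[symmetric])
      qed
      have od: "Fz (Ival A (lamS A) (phS A) x t) \<ge> ennreal (t / (16 * r0))"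
        by (rule ode[OF A E Ab True t r0 rb])
      show ?thesis
      proof (rule ccontr)
        assume "\<not> heatK_fin G A x x t \<le> y"
        then have "y \<le> Ival A (lamS A) (phS A) x t" by (simp add: hk_Ival)
        then have "Fz (Ival A (lamS A) (phS A) x t) \<le> Fz y" by (rule Fz_anti)
        with od Fy Ct have "ennreal (t / (16 * r0)) \<le> ennreal (t / (32 * r0))" by simp
        then have "t / (16 * r0) \<le> t / (32 * r0)" using t r0 by (simp add: ennreal_le_iff)
        then show False using t r0 by (simp add: field_simps)
      qed
    qed
  qed
qed

end

theorem mainTheorem19:
  fixes G :: "('v, 'e) mgraph" and \<phi> :: "real \<Rightarrow> real"
  assumes "wf_graph G" and "locally_finite G"
    and "\<forall>x>0. \<phi> x > 0" and "mono_on {0<..} \<phi>"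
    and iso: "\<forall>\<Omega>. admissible G \<Omega> \<and> vmeas G summable_on {v. Vx v \<in> \<Omega>} \<and> vol G \<Omega> > 0
              \<longrightarrow> boundary_area G \<Omega> \<ge> vol G \<Omega> / \<phi> (vol G \<Omega>)"
  defines "F \<equiv> (\<lambda>x. \<integral>\<^sup>+ u \<in> {x<..}. ennreal ((\<phi> (4 / u))\<^sup>2 / u) \<partial>lborel)"
    and "C \<equiv> 1 / (32 * rho_sup G)"
  shows "\<forall>x t. t > 0 \<longrightarrow> ereal (heatK G x x t) \<le> gen_inv F (C * ennreal t)"
proof (intro allI impI)
  fix x and t :: real
  assume t: "t > 0"
  interpret isog G \<phi>
    using assms(1-5) by (unfold_locales) auto
  have FF: "F = Fz" unfolding F_def by (rule ext) (simp add: Fz_def)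
  let ?S = "- bdry G"
  let ?K = "\<lambda>A. heatK_fin G A x x t"
  let ?L = "SUP A\<in>{A. finite A \<and> A \<subseteq> ?S}. ?K A"
  have lim: "(?K \<longlongrightarrow> ?L) (finite_subsets_at_top ?S)"
    by (rule mono_net_tendsto[where M="1 / vmeas G x"]) (use t in \<open>auto intro: KA_mono KA_bound\<close>)
  then have hk: "heatK G x x t = ?L" unfolding heatK_def by (rule tendsto_Lim[rotated]) simp
  have "ereal ?L \<le> z" if z: "z \<in> {ereal y | y. 0 < y \<and> F y \<le> C * ennreal t}" for z
  proof -
    from z obtain y where y: "z = ereal y" "y > 0" "Fz y \<le> 1 / (32 * rho_sup G) * ennreal t"
      by (auto simp: FF C_def)
    have "?L \<le> y"
    proof (rule cSUP_least)
      show "{A. finite A \<and> A \<subseteq> ?S} \<noteq> {}" by auto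
      fix A assume "A \<in> {A. finite A \<and> A \<subseteq> ?S}"
      then have A: "finite A" "A \<inter> bdry G = {}" by auto
      show "?K A \<le> y" by (rule KA_le_y[OF A t y(2,3)])
    qed
    then show ?thesis using y by simp
  qed
  then have "ereal ?L \<le> gen_inv F (C * ennreal t)" unfolding gen_inv_def by (rule Inf_greatest)
  then show "ereal (heatK G x x t) \<le> gen_inv F (C * ennreal t)" by (simp add: hk)
qed



end
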